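(* There exist two fully-connected ReLU networks $F$ and $F'$ (with the same number $N$ of node maps and the same input dimension $n_0$) such that the set of sign sequences $\{s(C): C \text{ an } n_0\text{-dimensional cell of } \mathcal{C}(F)\}\subset\{-1,1\}^N$ equals the set $\{s(C'): C' \text{ an } n_0\text{-dimensional cell of } \mathcal{C}(F')\}$, but the polyhedral complexes $\mathcal{C}(F)$ and $\mathcal{C}(F')$ are not combinatorially equivalent (their face posets are not isomorphic).
   Context: A ReLU network of architecture $(n_0,\dots,n_m,1)$ is given by affine maps $A_i:\mathbb{R}^{n_{i-1}}\to\mathbb{R}^{n_i}$, $1\le i\le m+1$, $n_{m+1}=1$; $F_i=\mathrm{ReLU}\circ A_i$ ($i\le m$), $G=A_{m+1}$, $F=G\circ F_m\circ\cdots\circ F_1$, $F_{(k)}=F_k\circ\cdots\circ F_1$ ($F_{(0)}=\mathrm{id}$). Node maps: $F_{ij}=\pi_j\circ A_i\circ F_{(i-1)}:\mathbb{R}^{n_0}\to\mathbb{R}$, $1\le i\le m+1$, $1\le j\le n_i$; $N=n_1+\cdots+n_m+1$. $R^{(i)}$ is the polyhedral complex on $\mathbb{R}^{n_{i-1}}$ induced by the hyperplanes $\{\pi_jA_i=0\}$ (cells: nonempty intersections of one choice among $\{\pi_jA_i\ge0\},\{\pi_jA_i\le0\},\{\pi_jA_i=0\}$ for each $j$). Canonical polyhedral complex: $\mathcal{C}(F_{(1)})=R^{(1)}$, $\mathcal{C}(F_{(k)})=\{C\cap F_{(k-1)}^{-1}(R)\neq\emptyset: C\in\mathcal{C}(F_{(k-1)}),R\in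 R^{(k)}\}$ for $2\le k\le m+1$ (the arrangement of $G$ at the last step); $\mathcal{C}(F)$ is the last one. For a cell $C$, its sign sequence $s(C)\in\{-1,0,1\}^N$ has entries $s_{ij}(C)=\mathrm{sgn}(F_{ij}(x))$ for any $x$ in the relative interior of $C$ (this is well defined). On $n_0$-dimensional cells these sign sequences are the activation patterns, lying in $\{-1,1\}^N$. *)

theory Defs
  imports "HOL-Analysis.Analysis" "HOL-Library.Function_Algebras"
begin

text \<open>Points of R^n are modelled as functions nat => real that vanish at all
  coordinates >= n.  To use the library notions (affine hull, relative interior,
  faces, dimension) we equip nat => real with its pointwise real vector space
  structure (the topology is the product topology from HOL-Analysis).\<close>

instantiation "fun" :: (type, real_vector) real_vector
begin
definition scaleR_fun_def: "scaleR r f = (\<lambda>x. r *\<^sub>R f x)"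
instance by standard (auto simp: scaleR_fun_def fun_eq_iff algebra_simps)
end

type_synonym point = "nat \<Rightarrow> real"

definition ambient :: "nat \<Rightarrow> point set" where
  "ambient n = {x. \<forall>i\<ge>n. x i = 0}"

type_synonym layer = "(nat \<Rightarrow> nat \<Rightarrow> real) \<times> (nat \<Rightarrow> real)"

definition affine_app :: "layer \<Rightarrow> nat \<Rightarrow> nat \<Rightarrow> point \<Rightarrow> point" where
  "affine_app L nin nout x =
     (\<lambda>j. if j < nout then (\<Sum>k<nin. fst L j k * x k) + snd L j else 0)"

definition relu :: "point \<Rightarrow> point" where
  "relu x = (\<lambda>j. max 0 (x j))"

text \<open>A network: architecture ns = [n0, n1, ..., nm, 1] and layers
  Ls = [A1, ..., A(m+1)].\<close>
definition wf_net :: "nat list \<Rightarrow> layer list \<Rightarrow> bool" where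
  "wf_net ns Ls \<longleftrightarrow> length Ls \<ge> 1 \<and> length ns = length Ls + 1 \<and>
     last ns = 1 \<and> (\<forall>i<length ns. ns ! i \<ge> 1)"

fun Fpre :: "nat list \<Rightarrow> layer list \<Rightarrow> nat \<Rightarrow> point \<Rightarrow> point" where
  "Fpre ns Ls 0 x = x"
| "Fpre ns Ls (Suc k) x = relu (affine_app (Ls ! k) (ns ! k) (ns ! Suc k) (Fpre ns Ls k x))"

text \<open>Node map F_ij = pi_j o A_i o F_(i-1), for 1 <= i <= m+1 and 0 <= j < n_i
  (0-based index j).\<close>
definition node_map :: "nat list \<Rightarrow> layer list \<Rightarrow> nat \<Rightarrow> nat \<Rightarrow> point \<Rightarrow> real" where
  "node_map ns Ls i j x =
     affine_app (Ls ! (i - 1)) (ns ! (i - 1)) (ns ! i) (Fpre ns Ls (i - 1) x) j"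

text \<open>Cells of R^(i): nonempty sets of the form: for every j < n_i one of
  pi_j A_i >= 0, <= 0, = 0 (encoded by sigma j = 1, -1, 0), inside R^(n_(i-1)).\<close>
definition sign_cond :: "int \<Rightarrow> real \<Rightarrow> bool" where
  "sign_cond s t \<longleftrightarrow> (if s = 1 then t \<ge> 0 else if s = -1 then t \<le> 0 else t = 0)"

definition arrangement :: "nat list \<Rightarrow> layer list \<Rightarrow> nat \<Rightarrow> point set set" where
  "arrangement ns Ls i =
     {R. R \<noteq> {} \<and> (\<exists>\<sigma>::nat \<Rightarrow> int. (\<forall>j. \<sigma> j \<in> {-1, 0, 1}) \<and>
        R = {y \<in> ambient (ns ! (i - 1)).
               \<forall>j < ns ! i. sign_cond (\<sigma> j) (affine_app (Ls ! (i - 1)) (ns ! (i - 1)) (ns ! i) y j)})}"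

text \<open>Canonical polyhedral complex C(F_(k)).  canon 0 = {R^n0}, so canon 1 = R^(1),
  and canon (k+1) = {C \<inter> F_(k)^-1(R) nonempty : C in canon k, R in R^(k+1)}.\<close>
fun canon :: "nat list \<Rightarrow> layer list \<Rightarrow> nat \<Rightarrow> point set set" where
  "canon ns Ls 0 = {ambient (ns ! 0)}"
| "canon ns Ls (Suc k) =
     {D. D \<noteq> {} \<and> (\<exists>C \<in> canon ns Ls k. \<exists>R \<in> arrangement ns Ls (Suc k).
            D = C \<inter> (Fpre ns Ls k -` R))}"

definition canonical_complex :: "nat list \<Rightarrow> layer list \<Rightarrow> point set set" where
  "canonical_complex ns Ls = canon ns Ls (length Ls)"

definition cell_dim :: "point set \<Rightarrow> nat" where
  "cell_dim C = dim {x - y | x y. x \<in> C \<and> y \<in> C}"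

definition sign_seq :: "nat list \<Rightarrow> layer list \<Rightarrow> point set \<Rightarrow> real list" where
  "sign_seq ns Ls C =
     (let x = (SOME x. x \<in> rel_interior C) in
      concat (map (\<lambda>i. map (\<lambda>j. sgn (node_map ns Ls i j x)) [0..<ns ! i])
                  [1..<length Ls + 2]))"

definition comb_equiv :: "point set set \<Rightarrow> point set set \<Rightarrow> bool" where
  "comb_equiv P Q \<longleftrightarrow> (\<exists>f. bij_betw f P Q \<and>
     (\<forall>C\<in>P. \<forall>D\<in>P. C face_of D \<longleftrightarrow> f C face_of f D))"

end

theory Submission
  imports Defs
begin


definition mkpt :: "real \<Rightarrow> real \<Rightarrow> point" where
  "mkpt x y = (\<lambda>i. if i = 0 then x else if i = 1 then y else 0)"
definition emb :: "(real \<Rightarrow> real \<Rightarrow> bool) \<Rightarrow> point set" where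
  "emb P = {p \<in> ambient 2. P (p 0) (p 1)}"

lemma amb2_mkpt: "p \<in> ambient 2 \<Longrightarrow> p = mkpt (p 0) (p 1)"
  by (auto simp: ambient_def mkpt_def fun_eq_iff)
lemma mkpt_amb[simp]: "mkpt x y \<in> ambient 2"
  by (auto simp: ambient_def mkpt_def)
lemma mkpt_app[simp]: "mkpt x y 0 = x" "mkpt x y (Suc 0) = y"
  by (auto simp: mkpt_def)
lemma emb_mem[simp]: "mkpt x y \<in> emb P \<longleftrightarrow> P x y"
  by (simp add: emb_def)
lemma emb_eq: "emb P = emb Q \<longleftrightarrow> (\<forall>x y. P x y = Q x y)"
proof
  assume "emb P = emb Q"
  then show "\<forall>x y. P x y = Q x y" by (metis emb_mem)
qed (auto simp: emb_def)
lemma emb_empty: "emb P = {} \<longleftrightarrow> (\<forall>x y. \<not> P x y)"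
proof
  assume "emb P = {}"
  then show "\<forall>x y. \<not> P x y" by (metis emb_mem empty_iff)
qed (auto simp: emb_def)

definition W1 :: "nat \<Rightarrow> nat \<Rightarrow> real" where
  "W1 j k = (if j = 0 \<and> k = 0 then 1 else if j = 1 \<and> k = 1 then 1 else if j = 2 \<and> k = 1 then -1 else 0)"
definition L1 :: layer where "L1 = (W1, \<lambda>j. 0)"
definition L3 :: layer where "L3 = (\<lambda>j k. 0, \<lambda>j. -1)"
definition nsx :: "nat list" where "nsx = [2,3,1,1]"

definition zf :: "layer \<Rightarrow> real \<Rightarrow> real \<Rightarrow> real" where
  "zf L x y = fst L 0 0 * max 0 x + fst L 0 1 * max 0 y + fst L 0 2 * max 0 (-y) + snd L 0"


lemma Fpre1: "Fpre nsx [L1, L2, L3] 1 p = (\<lambda>j. if j = 0 then max 0 (p 0) else if j = 1 then max 0 (p 1) else if j = 2 then max 0 (- p 1) else 0)"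
  by (auto simp: nsx_def L1_def W1_def relu_def affine_app_def fun_eq_iff numeral_2_eq_2 numeral_3_eq_3)

lemma Fpre2: "Fpre nsx [L1, L2, L3] 2 p = (\<lambda>j. if j = 0 then max 0 (zf L2 (p 0) (p 1)) else 0)"
proof -
  have "Fpre nsx [L1, L2, L3] 2 p = relu (affine_app L2 3 1 (Fpre nsx [L1, L2, L3] 1 p))"
    by (simp add: numeral_2_eq_2 nsx_def)
  also have "\<dots> = (\<lambda>j. if j = 0 then max 0 (zf L2 (p 0) (p 1)) else 0)"
    unfolding Fpre1 by (auto simp: relu_def affine_app_def fun_eq_iff numeral_3_eq_3 numeral_2_eq_2 zf_def)
  finally show ?thesis .
qed

lemma Fpre3: "Fpre nsx [L1, L2, L3] 3 p = (\<lambda>j. 0)"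
proof -
  have "Fpre nsx [L1, L2, L3] (Suc 2) p = relu (affine_app L3 1 1 (Fpre nsx [L1, L2, L3] 2 p))"
    by (simp only: Fpre.simps) (simp add: nsx_def)
  then show ?thesis by (auto simp: relu_def affine_app_def fun_eq_iff L3_def numeral_3_eq_3)
qed

lemma nm1: "node_map nsx [L1, L2, L3] 1 j p = (if j = 0 then p 0 else if j = 1 then p 1 else if j = 2 then - p 1 else 0)"
  by (auto simp: node_map_def nsx_def L1_def W1_def affine_app_def numeral_2_eq_2 numeral_3_eq_3)
lemma nm2: "node_map nsx [L1, L2, L3] 2 0 p = zf L2 (p 0) (p 1)"
proof -
  have "node_map nsx [L1, L2, L3] 2 0 p = affine_app L2 3 1 (Fpre nsx [L1, L2, L3] 1 p) 0"
    by (simp add: node_map_def nsx_def del: Fpre.simps)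
  then show ?thesis unfolding Fpre1 by (simp add: affine_app_def numeral_3_eq_3 numeral_2_eq_2 zf_def del: Fpre.simps)
qed
lemma nm3: "node_map nsx [L1, L2, L3] 3 0 p = -1"
  by (simp add: node_map_def nsx_def affine_app_def numeral_3_eq_3 numeral_2_eq_2 L3_def)
lemma nm4: "node_map nsx [L1, L2, L3] 4 j p = affine_app (([]::layer list) ! 0) 1 (([]::nat list) ! 0) (\<lambda>j. 0) j"
proof -
  have "node_map nsx [L1, L2, L3] 4 j p = affine_app ([L1, L2, L3] ! 3) (nsx ! 3) (nsx ! 4) (Fpre nsx [L1, L2, L3] 3 p) j"
    by (simp add: node_map_def del: Fpre.simps)
  then show ?thesis unfolding Fpre3 by (simp add: nsx_def numeral_3_eq_3 numeral_Bit0 del: Fpre.simps)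
qed

definition GG :: "real list" where
  "GG = map (\<lambda>j. sgn (affine_app (([]::layer list) ! 0) 1 (([]::nat list) ! 0) (\<lambda>j. 0) j)) [0..<([]::nat list) ! 0]"

lemma sseq: "concat (map (\<lambda>i. map (\<lambda>j. sgn (node_map nsx [L1, L2, L3] i j p)) [0..<nsx ! i])
                  [1..<length [L1, L2, L3] + 2]) = [sgn (p 0), sgn (p 1), sgn (- p 1), sgn (zf L2 (p 0) (p 1)), -1] @ GG"
proof -
  have e: "[1..<length [L1, L2, L3] + 2] = [1,2,3,4]" by (simp add: upt_rec)
  have n: "nsx ! Suc 0 = 3" "nsx ! 2 = 1" "nsx ! 3 = 1" "nsx ! 4 = ([]::nat list) ! 0"
    by (simp_all add: nsx_def numeral_3_eq_3 numeral_Bit0)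
  have u: "[0..<3] = [0,1,2::nat]" "[0..<1] = [0::nat]" by (simp_all add: upt_rec)
  have nm1': "node_map nsx [L1, L2, L3] (Suc 0) j p = (if j = 0 then p 0 else if j = 1 then p 1 else if j = 2 then - p 1 else 0)" for j
    using nm1 by simp
  show ?thesis unfolding e
    by (simp add: n u nm1' nm2 nm3 nm4 GG_def del: Fpre.simps)
qed

definition cellZ :: "layer \<Rightarrow> int \<Rightarrow> int \<Rightarrow> int \<Rightarrow> int \<Rightarrow> point set" where
  "cellZ L a b c d = emb (\<lambda>x y. sign_cond a x \<and> sign_cond b y \<and> sign_cond c (-y) \<and> sign_cond d (zf L x y))"

lemma aff1: "affine_app L1 2 3 p j = (if j = 0 then p 0 else if j = 1 then p 1 else if j = 2 then - p 1 else 0)"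
  by (auto simp: L1_def W1_def affine_app_def numeral_2_eq_2 numeral_3_eq_3)

lemma set1: "{y \<in> ambient (nsx ! (1 - 1)). \<forall>j < nsx ! 1. sign_cond (\<sigma> j) (affine_app ([L1, L2, L3] ! (1 - 1)) (nsx ! (1 - 1)) (nsx ! 1) y j)}
   = emb (\<lambda>x y. sign_cond (\<sigma> 0) x \<and> sign_cond (\<sigma> 1) y \<and> sign_cond (\<sigma> 2) (-y))"
proof -
  have "(\<forall>j < 3. sign_cond (\<sigma> j) (affine_app L1 2 3 y j)) \<longleftrightarrow>
     sign_cond (\<sigma> 0) (y 0) \<and> sign_cond (\<sigma> 1) (y 1) \<and> sign_cond (\<sigma> 2) (-y 1)" for y
    unfolding aff1 unfolding numeral_3_eq_3 All_less_Suc by (simp add: numeral_2_eq_2 conj_ac)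
  then show ?thesis unfolding emb_def by (simp add: nsx_def)
qed

lemma arr1: "arrangement nsx [L1, L2, L3] 1 = {R. R \<noteq> {} \<and> (\<exists>a b c. a \<in> {-1,0,1} \<and> b \<in> {-1,0,1} \<and> c \<in> {-1,0,1} \<and>
   R = emb (\<lambda>x y. sign_cond a x \<and> sign_cond b y \<and> sign_cond c (-y)))}"
proof -
  have "arrangement nsx [L1, L2, L3] 1 = {R. R \<noteq> {} \<and> (\<exists>\<sigma>::nat\<Rightarrow>int. (\<forall>j. \<sigma> j \<in> {-1,0,1}) \<and>
     R = emb (\<lambda>x y. sign_cond (\<sigma> 0) x \<and> sign_cond (\<sigma> 1) y \<and> sign_cond (\<sigma> 2) (-y)))}"
    unfolding arrangement_def set1 ..
  also have "\<dots> = {R. R \<noteq> {} \<and> (\<exists>a b c. a \<in> {-1,0,1} \<and> b \<in> {-1,0,1} \<and> c \<in> {-1,0,1} \<and>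
   R = emb (\<lambda>x y. sign_cond a x \<and> sign_cond b y \<and> sign_cond c (-y)))}" (is "?A = ?B")
  proof
    show "?A \<subseteq> ?B"
    proof
      fix R assume "R \<in> ?A"
      then obtain \<sigma> :: "nat \<Rightarrow> int" where "R \<noteq> {}" "\<forall>j. \<sigma> j \<in> {-1,0,1}" 
         "R = emb (\<lambda>x y. sign_cond (\<sigma> 0) x \<and> sign_cond (\<sigma> 1) y \<and> sign_cond (\<sigma> 2) (-y))" by blast
      then show "R \<in> ?B" by blast
    qed
    show "?B \<subseteq> ?A"
    proof
      fix R assume "R \<in> ?B"
      then obtain a b c where "R \<noteq> {}" "a \<in> {-1,0,1}" "b \<in> {-1,0,1}" "c \<in> {-1,0,1}" and
        R: "R = emb (\<lambda>x y. sign_cond a x \<and> sign_cond b y \<and> sign_cond c (-y))" by blast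
      define \<sigma> :: "nat \<Rightarrow> int" where "\<sigma> = (\<lambda>j. if j = 0 then a else if j = 1 then b else if j = 2 then c else 0)"
      have "\<forall>j. \<sigma> j \<in> {-1,0,1}" using \<open>a \<in> _\<close> \<open>b \<in> _\<close> \<open>c \<in> _\<close> by (simp add: \<sigma>_def)
      moreover have "R = emb (\<lambda>x y. sign_cond (\<sigma> 0) x \<and> sign_cond (\<sigma> 1) y \<and> sign_cond (\<sigma> 2) (-y))"
        unfolding R by (simp add: \<sigma>_def)
      ultimately show "R \<in> ?A" using \<open>R \<noteq> {}\<close> by blast
    qed
  qed
  finally show ?thesis .
qed

lemma emb_sub: "emb P \<subseteq> ambient 2" by (auto simp: emb_def)

lemma Fpre0: "Fpre ns Ls 0 = (\<lambda>x. x)" by (simp add: fun_eq_iff)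

lemma canon1: "canon nsx [L1, L2, L3] 1 = arrangement nsx [L1, L2, L3] 1"
proof -
  have "canon nsx [L1, L2, L3] (Suc 0) = {D. D \<noteq> {} \<and> (\<exists>R \<in> arrangement nsx [L1, L2, L3] 1. D = ambient 2 \<inter> R)}"
    by (simp add: nsx_def Fpre0)
  also have "\<dots> = arrangement nsx [L1, L2, L3] 1"
    unfolding arr1 using emb_sub by blast
  finally show ?thesis by simp
qed

lemma pre2: "Fpre nsx [L1, L2, L3] 1 -` {q \<in> ambient (nsx ! (2 - 1)). \<forall>j < nsx ! 2. sign_cond (\<sigma> j) (affine_app ([L1, L2, L3] ! (2 - 1)) (nsx ! (2 - 1)) (nsx ! 2) q j)}
   = {p. sign_cond (\<sigma> 0) (zf L2 (p 0) (p 1))}"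
proof -
  have a: "affine_app L2 3 1 (Fpre nsx [L1, L2, L3] 1 p) 0 = zf L2 (p 0) (p 1)" for p
    unfolding Fpre1 by (simp add: affine_app_def numeral_3_eq_3 numeral_2_eq_2 zf_def del: Fpre.simps)
  have b: "Fpre nsx [L1, L2, L3] 1 p \<in> ambient 3" for p
    unfolding Fpre1 by (simp add: ambient_def)
  show ?thesis using a b by (auto simp: nsx_def simp del: Fpre.simps)
qed

lemma pre3: "Fpre nsx [L1, L2, L3] 2 -` {q \<in> ambient (nsx ! (3 - 1)). \<forall>j < nsx ! 3. sign_cond (\<sigma> j) (affine_app ([L1, L2, L3] ! (3 - 1)) (nsx ! (3 - 1)) (nsx ! 3) q j)}
   = (if sign_cond (\<sigma> 0) (-1) then UNIV else {})"
proof -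
  have a: "affine_app L3 1 1 q 0 = -1" for q
    by (simp add: affine_app_def L3_def)
  have b: "Fpre nsx [L1, L2, L3] 2 p \<in> ambient 1" for p
    unfolding Fpre2 by (simp add: ambient_def)
  have c: "[L1, L2, L3] ! (3 - 1) = L3" "nsx ! (3 - 1) = 1" "nsx ! 3 = 1"
    by (simp_all add: nsx_def numeral_3_eq_3)
  show ?thesis unfolding c using a b by (auto simp del: Fpre.simps)
qed

lemma emb_int: "emb P \<inter> {p. Q (p 0) (p 1)} = emb (\<lambda>x y. P x y \<and> Q x y)"
  by (auto simp: emb_def)

lemma arr_mem: "R \<in> arrangement ns Ls i \<longleftrightarrow> R \<noteq> {} \<and> (\<exists>\<sigma>::nat \<Rightarrow> int. (\<forall>j. \<sigma> j \<in> {-1, 0, 1}) \<and>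
        R = {y \<in> ambient (ns ! (i - 1)).
               \<forall>j < ns ! i. sign_cond (\<sigma> j) (affine_app (Ls ! (i - 1)) (ns ! (i - 1)) (ns ! i) y j)})"
  unfolding arrangement_def by blast

lemma canon2: "canon nsx [L1, L2, L3] 2 = {D. D \<noteq> {} \<and> (\<exists>a b c d. a \<in> {-1,0,1} \<and> b \<in> {-1,0,1} \<and> c \<in> {-1,0,1} \<and> d \<in> {-1,0,1} \<and> D = cellZ L2 a b c d)}"
  (is "_ = ?B")
proof -
  have e: "canon nsx [L1, L2, L3] 2 = {D. D \<noteq> {} \<and> (\<exists>C \<in> canon nsx [L1, L2, L3] 1. \<exists>R \<in> arrangement nsx [L1, L2, L3] 2.
            D = C \<inter> (Fpre nsx [L1, L2, L3] 1 -` R))}"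
    by (simp add: numeral_2_eq_2 del: Fpre.simps)
  show ?thesis
  proof (rule set_eqI, rule iffI)
    fix D assume "D \<in> canon nsx [L1, L2, L3] 2"
    then obtain C R where D: "D \<noteq> {}" "C \<in> canon nsx [L1, L2, L3] 1" "R \<in> arrangement nsx [L1, L2, L3] 2"
      "D = C \<inter> (Fpre nsx [L1, L2, L3] 1 -` R)" unfolding e by blast
    from D(2) obtain a b c where abc: "a \<in> {-1,0,1}" "b \<in> {-1,0,1}" "c \<in> {-1,0,1}"
      "C = emb (\<lambda>x y. sign_cond a x \<and> sign_cond b y \<and> sign_cond c (-y))"
      unfolding canon1 arr1 by blast
    from D(3) obtain \<sigma> where s: "\<forall>j. \<sigma> j \<in> {-1, 0, 1}" "R = {q \<in> ambient (nsx ! (2 - 1)). \<forall>j < nsx ! 2. sign_cond (\<sigma> j) (affine_app ([L1, L2, L3] ! (2 - 1)) (nsx ! (2 - 1)) (nsx ! 2) q j)}"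
      unfolding arr_mem by blast
    have "D = cellZ L2 a b c (\<sigma> 0)"
      unfolding D(4) abc(4) s(2) pre2 cellZ_def by (auto simp: emb_def)
    then show "D \<in> ?B" using D(1) abc s(1) by blast
  next
    fix D assume "D \<in> ?B"
    then obtain a b c d where D: "D \<noteq> {}" "a \<in> {-1,0,1}" "b \<in> {-1,0,1}" "c \<in> {-1,0,1}" "d \<in> {-1,0,1}"
      "D = cellZ L2 a b c d" by blast
    define C where "C = emb (\<lambda>x y. sign_cond a x \<and> sign_cond b y \<and> sign_cond c (-y))"
    define \<sigma> :: "nat \<Rightarrow> int" where "\<sigma> = (\<lambda>j. d)"
    define R where "R = {q \<in> ambient (nsx ! (2 - 1)). \<forall>j < nsx ! 2. sign_cond (\<sigma> j) (affine_app ([L1, L2, L3] ! (2 - 1)) (nsx ! (2 - 1)) (nsx ! 2) q j)}"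
    have DCR: "D = C \<inter> (Fpre nsx [L1, L2, L3] 1 -` R)"
      unfolding R_def pre2 C_def D(6) cellZ_def by (auto simp: \<sigma>_def emb_def)
    have "C \<noteq> {}" "R \<noteq> {}" using DCR D(1) by auto
    have "C \<in> canon nsx [L1, L2, L3] 1" unfolding canon1 arr1 C_def using D \<open>C \<noteq> {}\<close> C_def by blast
    moreover have "R \<in> arrangement nsx [L1, L2, L3] 2" unfolding arr_mem
      apply (rule conjI, fact)
      apply (rule exI[of _ \<sigma>])
      using D(5) by (simp add: R_def \<sigma>_def)
    ultimately show "D \<in> canon nsx [L1, L2, L3] 2" unfolding e mem_Collect_eq using DCR D(1) by blast
  qed
qed

lemma canon3: "canonical_complex nsx [L1, L2, L3] = canon nsx [L1, L2, L3] 2"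
proof -
  have e: "canonical_complex nsx [L1, L2, L3] = {D. D \<noteq> {} \<and> (\<exists>C \<in> canon nsx [L1, L2, L3] 2. \<exists>R \<in> arrangement nsx [L1, L2, L3] 3.
            D = C \<inter> (Fpre nsx [L1, L2, L3] 2 -` R))}"
    unfolding canonical_complex_def by (simp add: numeral_3_eq_3 numeral_2_eq_2 del: Fpre.simps canon.simps(1))
  show ?thesis
  proof (rule set_eqI, rule iffI)
    fix D assume "D \<in> canonical_complex nsx [L1, L2, L3]"
    then obtain C R where D: "D \<noteq> {}" "C \<in> canon nsx [L1, L2, L3] 2" "R \<in> arrangement nsx [L1, L2, L3] 3"
      "D = C \<inter> (Fpre nsx [L1, L2, L3] 2 -` R)" unfolding e by blast
    from D(3) obtain \<sigma> where s: "R = {q \<in> ambient (nsx ! (3 - 1)). \<forall>j < nsx ! 3. sign_cond (\<sigma> j) (affine_app ([L1, L2, L3] ! (3 - 1)) (nsx ! (3 - 1)) (nsx ! 3) q j)}"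
      unfolding arr_mem by blast
    have "D = C" using D(1) unfolding D(4) s pre3 by (auto split: if_splits)
    then show "D \<in> canon nsx [L1, L2, L3] 2" using D(2) by simp
  next
    fix D assume D: "D \<in> canon nsx [L1, L2, L3] 2"
    have "D \<noteq> {}" using D unfolding canon2 by blast
    define \<sigma> :: "nat \<Rightarrow> int" where "\<sigma> = (\<lambda>j. -1)"
    define R where "R = {q \<in> ambient (nsx ! (3 - 1)). \<forall>j < nsx ! 3. sign_cond (\<sigma> j) (affine_app ([L1, L2, L3] ! (3 - 1)) (nsx ! (3 - 1)) (nsx ! 3) q j)}"
    have pr: "Fpre nsx [L1, L2, L3] 2 -` R = UNIV" unfolding R_def pre3 by (simp add: \<sigma>_def sign_cond_def)
    then have "R \<noteq> {}" by auto
    have "R \<in> arrangement nsx [L1, L2, L3] 3" unfolding arr_mem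
      apply (rule conjI, fact)
      apply (rule exI[of _ \<sigma>])
      by (simp add: R_def \<sigma>_def)
    then show "D \<in> canonical_complex nsx [L1, L2, L3]" unfolding e mem_Collect_eq
      using D \<open>D \<noteq> {}\<close> pr by blast
  qed
qed


lemma mkpt_plus: "mkpt a b + mkpt c d = mkpt (a + c) (b + d)"
  by (auto simp: mkpt_def fun_eq_iff plus_fun_def)
lemma mkpt_minus: "mkpt a b - mkpt c d = mkpt (a - c) (b - d)"
  by (auto simp: mkpt_def fun_eq_iff fun_diff_def)
lemma mkpt_scale: "s *\<^sub>R mkpt a b = mkpt (s * a) (s * b)"
  by (auto simp: mkpt_def fun_eq_iff scaleR_fun_def)

lemma subspace_amb: "subspace (ambient n)"
  by (auto simp: subspace_def ambient_def plus_fun_def scaleR_fun_def zero_fun_def)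

lemma dir_lemma:
  fixes x q1 q2 :: point
  assumes x: "x \<in> rel_interior C" and q: "q1 \<in> C" "q2 \<in> C"
  shows "\<exists>e>0. x + e *\<^sub>R (q1 - q2) \<in> C \<and> x + (-e) *\<^sub>R (q1 - q2) \<in> C"
proof -
  obtain T where T: "open T" "x \<in> T \<inter> C" "T \<inter> affine hull C \<subseteq> C"
    using x unfolding mem_rel_interior by blast
  define g where "g = (\<lambda>t::real. x + t *\<^sub>R (q1 - q2))"
  have ge: "g = (\<lambda>t i. x i + t * (q1 i - q2 i))"
    by (auto simp: g_def fun_eq_iff plus_fun_def scaleR_fun_def)
  have "continuous_on UNIV g"
    unfolding ge
    by (rule continuous_on_coordinatewise_then_product) (intro continuous_intros)
  then have "open (g -` T)" using T(1) by (simp add: open_vimage)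
  moreover have "0 \<in> g -` T" using T(2) by (simp add: g_def)
  ultimately obtain r where r: "r > 0" "ball 0 r \<subseteq> g -` T"
    using open_contains_ball by blast
  have aff: "g t \<in> affine hull C" for t
    unfolding g_def
    by (rule mem_affine_3_minus) (use T(2) q in \<open>auto intro: hull_inc\<close>)
  have "r/2 \<in> ball 0 r" "-(r/2) \<in> ball 0 r" using r(1) by (auto simp: dist_real_def)
  then have "g (r/2) \<in> T" "g (-(r/2)) \<in> T" using r(2) by blast+
  then have "g (r/2) \<in> C" "g (-(r/2)) \<in> C" using aff T(3) by blast+
  then show ?thesis using r(1) unfolding g_def by (intro exI[of _ "r/2"]) auto
qed

lemma relint_I:
  assumes "C \<subseteq> ambient 2" "d > 0" "\<And>x y. \<bar>x - u\<bar> < d \<Longrightarrow> \<bar>y - v\<bar> < d \<Longrightarrow> mkpt x y \<in> C"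
  shows "mkpt u v \<in> rel_interior C"
proof -
  define T where "T = {p::point. p 0 \<in> ball u d} \<inter> {p. p 1 \<in> ball v d}"
  have "open T" unfolding T_def
    by (intro open_Int open_vimage[unfolded vimage_def, of _ "\<lambda>p::point. p _", simplified]) auto
  moreover have "mkpt u v \<in> T \<inter> C" using assms(2,3) by (auto simp: T_def)
  moreover have "T \<inter> affine hull C \<subseteq> C"
  proof
    fix p assume p: "p \<in> T \<inter> affine hull C"
    have "affine hull C \<subseteq> ambient 2"
      by (rule hull_minimal[OF assms(1)]) (rule subspace_imp_affine[OF subspace_amb])
    then have "p = mkpt (p 0) (p 1)" using p amb2_mkpt by blast
    moreover have "mkpt (p 0) (p 1) \<in> C" using p assms(3) by (auto simp: T_def dist_real_def abs_minus_commute)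
    ultimately show "p \<in> C" by simp
  qed
  ultimately show ?thesis unfolding mem_rel_interior by blast
qed
lemma lowdim:
  assumes "C \<subseteq> emb (\<lambda>x y. \<alpha> * x + \<beta> * y = \<gamma>)" "\<alpha> \<noteq> 0 \<or> \<beta> \<noteq> 0"
  shows "cell_dim C \<le> 1"
proof -
  define w where "w = mkpt (-\<beta>) \<alpha>"
  have "{x - y | x y. x \<in> C \<and> y \<in> C} \<subseteq> span {w}"
  proof
    fix d assume "d \<in> {x - y | x y. x \<in> C \<and> y \<in> C}"
    then obtain p q where pq: "p \<in> C" "q \<in> C" "d = p - q" by blast
    have p: "p = mkpt (p 0) (p 1)" "\<alpha> * p 0 + \<beta> * p 1 = \<gamma>" using pq(1) assms(1) amb2_mkpt by (auto simp: emb_def)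
    have q: "q = mkpt (q 0) (q 1)" "\<alpha> * q 0 + \<beta> * q 1 = \<gamma>" using pq(2) assms(1) amb2_mkpt by (auto simp: emb_def)
    have d: "d = mkpt (p 0 - q 0) (p 1 - q 1)" using p(1) q(1) pq(3) mkpt_minus by metis
    have eq: "\<alpha> * (p 0 - q 0) + \<beta> * (p 1 - q 1) = 0" using p(2) q(2) by (simp add: algebra_simps)
    obtain k where "p 0 - q 0 = k * (-\<beta>)" "p 1 - q 1 = k * \<alpha>"
    proof (cases "\<alpha> = 0")
      case True
      then have "\<beta> \<noteq> 0" using assms(2) by simp
      show ?thesis using True eq \<open>\<beta> \<noteq> 0\<close> by (intro that[of "-(p 0 - q 0)/\<beta>"]) (auto simp: field_simps)
    next
      case False
      show ?thesis using False eq by (intro that[of "(p 1 - q 1)/\<alpha>"]) (auto simp: field_simps)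
    qed
    then have "d = k *\<^sub>R w" unfolding d w_def mkpt_scale by simp
    then show "d \<in> span {w}" by (simp add: span_base span_mul)
  qed
  then have "dim {x - y | x y. x \<in> C \<and> y \<in> C} \<le> card {w}" by (rule dim_le_card) simp
  then show ?thesis by (simp add: cell_dim_def)
qed

lemma fulldim:
  assumes "C \<subseteq> ambient 2" "mkpt u v \<in> C" "mkpt (u + \<delta>) v \<in> C" "mkpt u (v + \<delta>) \<in> C" "\<delta> \<noteq> 0"
  shows "cell_dim C = 2"
proof -
  let ?D = "{x - y | x y. x \<in> C \<and> y \<in> C}"
  have spn: "?D \<subseteq> span {mkpt \<delta> 0, mkpt 0 \<delta>}"
  proof
    fix d assume "d \<in> ?D"
    then obtain p q where pq: "p \<in> C" "q \<in> C" "d = p - q" by blast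
    have "p = mkpt (p 0) (p 1)" "q = mkpt (q 0) (q 1)" using pq assms(1) amb2_mkpt by auto
    then have "d = mkpt (p 0 - q 0) (p 1 - q 1)" using pq(3) mkpt_minus by metis
    also have "\<dots> = ((p 0 - q 0) / \<delta>) *\<^sub>R mkpt \<delta> 0 + ((p 1 - q 1) / \<delta>) *\<^sub>R mkpt 0 \<delta>"
      unfolding mkpt_scale mkpt_plus using assms(5) by simp
    finally show "d \<in> span {mkpt \<delta> 0, mkpt 0 \<delta>}"
      by (simp add: span_base span_mul span_add)
  qed
  have ne: "mkpt \<delta> 0 \<noteq> mkpt 0 \<delta>" using assms(5) by (metis mkpt_app(1))
  have sub: "{mkpt \<delta> 0, mkpt 0 \<delta>} \<subseteq> ?D"
  proof -
    have "mkpt \<delta> 0 = mkpt (u + \<delta>) v - mkpt u v" "mkpt 0 \<delta> = mkpt u (v + \<delta>) - mkpt u v"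
      by (simp_all add: mkpt_minus)
    then show ?thesis using assms(2,3,4) by blast
  qed
  have nz: "mkpt 0 \<delta> \<noteq> 0" using assms(5) by (metis mkpt_app(2) zero_fun_def)
  have ns: "mkpt \<delta> 0 \<notin> span {mkpt 0 \<delta>}"
  proof
    assume "mkpt \<delta> 0 \<in> span {mkpt 0 \<delta>}"
    then obtain k where "mkpt \<delta> 0 = k *\<^sub>R mkpt 0 \<delta>" by (auto simp: span_singleton)
    then have "mkpt \<delta> 0 = mkpt 0 (k * \<delta>)" by (simp add: mkpt_scale)
    then show False using assms(5) by (metis mkpt_app(1))
  qed
  have ind: "independent {mkpt \<delta> 0, mkpt 0 \<delta>}"
    using ne nz ns by (simp add: independent_insert)
  have "card {mkpt \<delta> 0, mkpt 0 \<delta>} = dim ?D" by (rule real_vector.basis_card_eq_dim[OF sub spn ind])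
  then show ?thesis using ne by (simp add: cell_dim_def)
qed

lemma sc_simps: "sign_cond 1 t \<longleftrightarrow> t \<ge> 0" "sign_cond (-1) t \<longleftrightarrow> t \<le> 0" "sign_cond 0 t \<longleftrightarrow> t = 0"
  by (auto simp: sign_cond_def)

lemma sc_sgn: "s \<in> {-1,0,1} \<Longrightarrow> sign_cond s t \<Longrightarrow> t \<noteq> 0 \<Longrightarrow> sgn t = of_int s"
  by (auto simp: sign_cond_def)

lemma sc_cross: "s \<in> {-1,0,1} \<Longrightarrow> sign_cond s p \<Longrightarrow> sign_cond s q \<Longrightarrow> p > 0 \<Longrightarrow> q < 0 \<Longrightarrow> False"
  by (auto simp: sign_cond_def)

definition Zp :: "layer \<Rightarrow> bool" where
  "Zp L \<longleftrightarrow> (\<forall>x y h. h > 0 \<longrightarrow> x \<noteq> 0 \<longrightarrow> y \<noteq> 0 \<longrightarrow> zf L x y = 0 \<longrightarrow> zf L (x + h) y > 0 \<and> zf L (x - h) y < 0)"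

lemma seq_full:
  assumes T: "a \<in> {-1,0,1}" "b \<in> {-1,0,1}" "c \<in> {-1,0,1}" "d \<in> {-1,0,1}"
    and Z: "Zp L" and r: "r > 0"
    and sq: "\<And>x y. \<bar>x - u\<bar> < r \<Longrightarrow> \<bar>y - v\<bar> < r \<Longrightarrow> mkpt x y \<in> cellZ L a b c d"
  shows "cell_dim (cellZ L a b c d) = 2 \<and>
    sign_seq nsx [L1, L, L3] (cellZ L a b c d) = [of_int a, of_int b, of_int c, of_int d, -1] @ GG"
proof -
  define C where "C = cellZ L a b c d"
  have Csub: "C \<subseteq> ambient 2" unfolding C_def cellZ_def by (rule emb_sub)
  define \<delta> where "\<delta> = r / 2"
  have \<delta>: "\<delta> > 0" "\<delta> < r" using r by (auto simp: \<delta>_def)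
  have q0: "mkpt u v \<in> C" "mkpt (u + \<delta>) v \<in> C" "mkpt u (v + \<delta>) \<in> C"
    unfolding C_def using sq \<delta> r by auto
  have dim: "cell_dim C = 2" using fulldim[OF Csub q0] \<delta> by simp
  have "mkpt u v \<in> rel_interior C" by (rule relint_I[OF Csub r]) (use sq C_def in auto)
  then have xin: "(SOME x. x \<in> rel_interior C) \<in> rel_interior C" by (rule someI[where P = "\<lambda>x. x \<in> rel_interior C"])
  define x where "x = (SOME x. x \<in> rel_interior C)"
  have xr: "x \<in> rel_interior C" using xin x_def by simp
  have "x \<in> C" using xr rel_interior_subset by blast
  then have xe: "x = mkpt (x 0) (x 1)" using Csub amb2_mkpt by blast
  have P: "mkpt s t \<in> C \<longleftrightarrow> sign_cond a s \<and> sign_cond b t \<and> sign_cond c (-t) \<and> sign_cond d (zf L s t)" for s t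
    unfolding C_def cellZ_def by simp
  obtain e1 where e1: "e1 > 0" "x + e1 *\<^sub>R (mkpt (u + \<delta>) v - mkpt u v) \<in> C" "x + (-e1) *\<^sub>R (mkpt (u + \<delta>) v - mkpt u v) \<in> C"
    using dir_lemma[OF xr q0(2) q0(1)] by blast
  obtain e2 where e2: "e2 > 0" "x + e2 *\<^sub>R (mkpt u (v + \<delta>) - mkpt u v) \<in> C" "x + (-e2) *\<^sub>R (mkpt u (v + \<delta>) - mkpt u v) \<in> C"
    using dir_lemma[OF xr q0(3) q0(1)] by blast
  define h1 where "h1 = e1 * \<delta>"
  define h2 where "h2 = e2 * \<delta>"
  have h: "h1 > 0" "h2 > 0" using e1 e2 \<delta> by (auto simp: h1_def h2_def)
  have d1: "mkpt (u + \<delta>) v - mkpt u v = mkpt \<delta> 0" "mkpt u (v + \<delta>) - mkpt u v = mkpt 0 \<delta>"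
    by (simp_all add: mkpt_minus)
  have aux: "mkpt p q + s *\<^sub>R mkpt a' b' = mkpt (p + s * a') (q + s * b')" for p q s a' b'
    by (simp add: mkpt_scale mkpt_plus)
  define X0 where "X0 = x 0"
  define X1 where "X1 = x 1"
  have xe': "x = mkpt X0 X1" using xe X0_def X1_def by simp
  have m1: "mkpt (x 0 + h1) (x 1) \<in> C" "mkpt (x 0 - h1) (x 1) \<in> C"
    using e1(2,3) unfolding d1 h1_def xe' aux X0_def[symmetric] X1_def[symmetric] by simp_all
  have m2: "mkpt (x 0) (x 1 + h2) \<in> C" "mkpt (x 0) (x 1 - h2) \<in> C"
    using e2(2,3) unfolding d1 h2_def xe' aux X0_def[symmetric] X1_def[symmetric] by simp_all
  have mx: "mkpt (x 0) (x 1) \<in> C" using \<open>x \<in> C\<close> xe by simp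
  have x0: "x 0 \<noteq> 0"
  proof
    assume "x 0 = 0"
    then show False using m1 P sc_cross[OF T(1), of "x 0 + h1" "x 0 - h1"] h by auto
  qed
  have x1: "x 1 \<noteq> 0"
  proof
    assume "x 1 = 0"
    then show False using m2 P sc_cross[OF T(2), of "x 1 + h2" "x 1 - h2"] h by auto
  qed
  have z: "zf L (x 0) (x 1) \<noteq> 0"
  proof
    assume "zf L (x 0) (x 1) = 0"
    then have "zf L (x 0 + h1) (x 1) > 0" "zf L (x 0 - h1) (x 1) < 0" using Z x0 x1 h unfolding Zp_def by blast+
    then show False using m1 P sc_cross[OF T(4)] by blast
  qed
  have sg: "sgn (x 0) = of_int a" "sgn (x 1) = of_int b" "sgn (- x 1) = of_int c" "sgn (zf L (x 0) (x 1)) = of_int d"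
    using mx P sc_sgn T x0 x1 z by (metis neg_equal_0_iff_equal)+
  have "sign_seq nsx [L1, L, L3] C = [sgn (x 0), sgn (x 1), sgn (- x 1), sgn (zf L (x 0) (x 1)), -1] @ GG"
    unfolding sign_seq_def Let_def x_def[symmetric] sseq ..
  then show ?thesis using dim sg by (simp add: C_def)
qed

lemma emb_mono: "(\<And>x y. P x y \<Longrightarrow> Q x y) \<Longrightarrow> emb P \<subseteq> emb Q" by (auto simp: emb_def)
definition PAT :: "real list set" where "PAT = {[1, 1, (-1), 1, -1] @ GG, [1, 1, (-1), (-1), -1] @ GG, [1, (-1), 1, 1, -1] @ GG, [1, (-1), 1, (-1), -1] @ GG, [(-1), 1, (-1), (-1), -1] @ GG, [(-1), (-1), 1, (-1), -1] @ GG}"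
definition L2A :: layer where "L2A = (\<lambda>j k. if k = 0 then 1 else 0, \<lambda>j. -1)"
lemma zA: "zf L2A x y = max 0 x - 1" by (simp add: zf_def L2A_def)
lemma ZpA: "Zp L2A" unfolding Zp_def zA by (auto simp: max_def)
definition cellsA :: "point set list" where "cellsA = [cellZ L2A (-1) (-1) (-1) (-1), cellZ L2A 0 (-1) (-1) (-1), cellZ L2A 0 (-1) 1 (-1), cellZ L2A 0 1 (-1) (-1), cellZ L2A 1 (-1) (-1) (-1), cellZ L2A 1 (-1) (-1) 0, cellZ L2A 1 (-1) (-1) 1, cellZ L2A 1 (-1) 1 0, cellZ L2A 1 1 (-1) 0, cellZ L2A 1 1 (-1) 1, cellZ L2A 1 1 (-1) (-1), cellZ L2A 1 (-1) 1 1, cellZ L2A 1 (-1) 1 (-1), cellZ L2A (-1) 1 (-1) (-1), cellZ L2A (-1) (-1) 1 (-1)]"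
lemma RA0: "cellZ L2A (-1) (-1) (-1) (-1) \<in> set cellsA" by (simp add: cellsA_def)
lemma RA1: "cellZ L2A 0 (-1) (-1) (-1) \<in> set cellsA" by (simp add: cellsA_def)
lemma RA2: "cellZ L2A 0 (-1) 1 (-1) \<in> set cellsA" by (simp add: cellsA_def)
lemma RA3: "cellZ L2A 0 1 (-1) (-1) \<in> set cellsA" by (simp add: cellsA_def)
lemma RA4: "cellZ L2A 1 (-1) (-1) (-1) \<in> set cellsA" by (simp add: cellsA_def)
lemma RA5: "cellZ L2A 1 (-1) (-1) 0 \<in> set cellsA" by (simp add: cellsA_def)
lemma RA6: "cellZ L2A 1 (-1) (-1) 1 \<in> set cellsA" by (simp add: cellsA_def)
lemma RA7: "cellZ L2A 1 (-1) 1 0 \<in> set cellsA" by (simp add: cellsA_def)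
lemma RA8: "cellZ L2A 1 1 (-1) 0 \<in> set cellsA" by (simp add: cellsA_def)
lemma RA9: "cellZ L2A 1 1 (-1) 1 \<in> set cellsA" by (simp add: cellsA_def)
lemma RA10: "cellZ L2A 1 1 (-1) (-1) \<in> set cellsA" by (simp add: cellsA_def)
lemma RA11: "cellZ L2A 1 (-1) 1 1 \<in> set cellsA" by (simp add: cellsA_def)
lemma RA12: "cellZ L2A 1 (-1) 1 (-1) \<in> set cellsA" by (simp add: cellsA_def)
lemma RA13: "cellZ L2A (-1) 1 (-1) (-1) \<in> set cellsA" by (simp add: cellsA_def)
lemma RA14: "cellZ L2A (-1) (-1) 1 (-1) \<in> set cellsA" by (simp add: cellsA_def)
lemma allA:
  assumes "a \<in> {-1,0,1}" "b \<in> {-1,0,1}" "c \<in> {-1,0,1}" "d \<in> {-1,0,1}"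
  shows "cellZ L2A a b c d = {} \<or> cellZ L2A a b c d \<in> set cellsA"
proof -
  have G0: "cellZ L2A (-1) (-1) (-1) (-1) = {} \<or> cellZ L2A (-1) (-1) (-1) (-1) \<in> set cellsA" using RA0 by (rule disjI2)
  have E1: "cellZ L2A (-1) 1 1 (-1) = cellZ L2A (-1) (-1) (-1) (-1)" unfolding cellZ_def emb_eq zA sc_simps by auto
  have G1: "cellZ L2A (-1) 1 1 (-1) = {} \<or> cellZ L2A (-1) 1 1 (-1) \<in> set cellsA" unfolding E1 using RA0 by (rule disjI2)
  have E2: "cellZ L2A (-1) (-1) 0 (-1) = cellZ L2A (-1) (-1) (-1) (-1)" unfolding cellZ_def emb_eq zA sc_simps by auto
  have G2: "cellZ L2A (-1) (-1) 0 (-1) = {} \<or> cellZ L2A (-1) (-1) 0 (-1) \<in> set cellsA" unfolding E2 using RA0 by (rule disjI2)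
  have E3: "cellZ L2A (-1) 0 (-1) (-1) = cellZ L2A (-1) (-1) (-1) (-1)" unfolding cellZ_def emb_eq zA sc_simps by auto
  have G3: "cellZ L2A (-1) 0 (-1) (-1) = {} \<or> cellZ L2A (-1) 0 (-1) (-1) \<in> set cellsA" unfolding E3 using RA0 by (rule disjI2)
  have E4: "cellZ L2A (-1) 0 1 (-1) = cellZ L2A (-1) (-1) (-1) (-1)" unfolding cellZ_def emb_eq zA sc_simps by auto
  have G4: "cellZ L2A (-1) 0 1 (-1) = {} \<or> cellZ L2A (-1) 0 1 (-1) \<in> set cellsA" unfolding E4 using RA0 by (rule disjI2)
  have E5: "cellZ L2A (-1) 1 0 (-1) = cellZ L2A (-1) (-1) (-1) (-1)" unfolding cellZ_def emb_eq zA sc_simps by auto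
  have G5: "cellZ L2A (-1) 1 0 (-1) = {} \<or> cellZ L2A (-1) 1 0 (-1) \<in> set cellsA" unfolding E5 using RA0 by (rule disjI2)
  have E6: "cellZ L2A (-1) 0 0 (-1) = cellZ L2A (-1) (-1) (-1) (-1)" unfolding cellZ_def emb_eq zA sc_simps by auto
  have G6: "cellZ L2A (-1) 0 0 (-1) = {} \<or> cellZ L2A (-1) 0 0 (-1) \<in> set cellsA" unfolding E6 using RA0 by (rule disjI2)
  have G7: "cellZ L2A (-1) (-1) (-1) 0 = {} \<or> cellZ L2A (-1) (-1) (-1) 0 \<in> set cellsA"
    unfolding cellZ_def emb_empty zA sc_simps by auto
  have G8: "cellZ L2A (-1) (-1) (-1) 1 = {} \<or> cellZ L2A (-1) (-1) (-1) 1 \<in> set cellsA"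
    unfolding cellZ_def emb_empty zA sc_simps by auto
  have G9: "cellZ L2A (-1) (-1) 0 0 = {} \<or> cellZ L2A (-1) (-1) 0 0 \<in> set cellsA"
    unfolding cellZ_def emb_empty zA sc_simps by auto
  have G10: "cellZ L2A (-1) (-1) 0 1 = {} \<or> cellZ L2A (-1) (-1) 0 1 \<in> set cellsA"
    unfolding cellZ_def emb_empty zA sc_simps by auto
  have G11: "cellZ L2A (-1) (-1) 1 0 = {} \<or> cellZ L2A (-1) (-1) 1 0 \<in> set cellsA"
    unfolding cellZ_def emb_empty zA sc_simps by auto
  have G12: "cellZ L2A (-1) (-1) 1 1 = {} \<or> cellZ L2A (-1) (-1) 1 1 \<in> set cellsA"
    unfolding cellZ_def emb_empty zA sc_simps by auto
  have G13: "cellZ L2A (-1) 0 (-1) 0 = {} \<or> cellZ L2A (-1) 0 (-1) 0 \<in> set cellsA"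
    unfolding cellZ_def emb_empty zA sc_simps by auto
  have G14: "cellZ L2A (-1) 0 (-1) 1 = {} \<or> cellZ L2A (-1) 0 (-1) 1 \<in> set cellsA"
    unfolding cellZ_def emb_empty zA sc_simps by auto
  have G15: "cellZ L2A (-1) 0 0 0 = {} \<or> cellZ L2A (-1) 0 0 0 \<in> set cellsA"
    unfolding cellZ_def emb_empty zA sc_simps by auto
  have G16: "cellZ L2A (-1) 0 0 1 = {} \<or> cellZ L2A (-1) 0 0 1 \<in> set cellsA"
    unfolding cellZ_def emb_empty zA sc_simps by auto
  have G17: "cellZ L2A (-1) 0 1 0 = {} \<or> cellZ L2A (-1) 0 1 0 \<in> set cellsA"
    unfolding cellZ_def emb_empty zA sc_simps by auto
  have G18: "cellZ L2A (-1) 0 1 1 = {} \<or> cellZ L2A (-1) 0 1 1 \<in> set cellsA"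
    unfolding cellZ_def emb_empty zA sc_simps by auto
  have G19: "cellZ L2A (-1) 1 (-1) 0 = {} \<or> cellZ L2A (-1) 1 (-1) 0 \<in> set cellsA"
    unfolding cellZ_def emb_empty zA sc_simps by auto
  have G20: "cellZ L2A (-1) 1 (-1) 1 = {} \<or> cellZ L2A (-1) 1 (-1) 1 \<in> set cellsA"
    unfolding cellZ_def emb_empty zA sc_simps by auto
  have G21: "cellZ L2A (-1) 1 0 0 = {} \<or> cellZ L2A (-1) 1 0 0 \<in> set cellsA"
    unfolding cellZ_def emb_empty zA sc_simps by auto
  have G22: "cellZ L2A (-1) 1 0 1 = {} \<or> cellZ L2A (-1) 1 0 1 \<in> set cellsA"
    unfolding cellZ_def emb_empty zA sc_simps by auto
  have G23: "cellZ L2A (-1) 1 1 0 = {} \<or> cellZ L2A (-1) 1 1 0 \<in> set cellsA"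
    unfolding cellZ_def emb_empty zA sc_simps by auto
  have G24: "cellZ L2A (-1) 1 1 1 = {} \<or> cellZ L2A (-1) 1 1 1 \<in> set cellsA"
    unfolding cellZ_def emb_empty zA sc_simps by auto
  have G25: "cellZ L2A 0 (-1) (-1) 0 = {} \<or> cellZ L2A 0 (-1) (-1) 0 \<in> set cellsA"
    unfolding cellZ_def emb_empty zA sc_simps by auto
  have G26: "cellZ L2A 0 (-1) (-1) 1 = {} \<or> cellZ L2A 0 (-1) (-1) 1 \<in> set cellsA"
    unfolding cellZ_def emb_empty zA sc_simps by auto
  have G27: "cellZ L2A 0 (-1) 0 0 = {} \<or> cellZ L2A 0 (-1) 0 0 \<in> set cellsA"
    unfolding cellZ_def emb_empty zA sc_simps by auto
  have G28: "cellZ L2A 0 (-1) 0 1 = {} \<or> cellZ L2A 0 (-1) 0 1 \<in> set cellsA"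
    unfolding cellZ_def emb_empty zA sc_simps by auto
  have G29: "cellZ L2A 0 (-1) 1 0 = {} \<or> cellZ L2A 0 (-1) 1 0 \<in> set cellsA"
    unfolding cellZ_def emb_empty zA sc_simps by auto
  have G30: "cellZ L2A 0 (-1) 1 1 = {} \<or> cellZ L2A 0 (-1) 1 1 \<in> set cellsA"
    unfolding cellZ_def emb_empty zA sc_simps by auto
  have G31: "cellZ L2A 0 0 (-1) 0 = {} \<or> cellZ L2A 0 0 (-1) 0 \<in> set cellsA"
    unfolding cellZ_def emb_empty zA sc_simps by auto
  have G32: "cellZ L2A 0 0 (-1) 1 = {} \<or> cellZ L2A 0 0 (-1) 1 \<in> set cellsA"
    unfolding cellZ_def emb_empty zA sc_simps by auto
  have G33: "cellZ L2A 0 0 0 0 = {} \<or> cellZ L2A 0 0 0 0 \<in> set cellsA"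
    unfolding cellZ_def emb_empty zA sc_simps by auto
  have G34: "cellZ L2A 0 0 0 1 = {} \<or> cellZ L2A 0 0 0 1 \<in> set cellsA"
    unfolding cellZ_def emb_empty zA sc_simps by auto
  have G35: "cellZ L2A 0 0 1 0 = {} \<or> cellZ L2A 0 0 1 0 \<in> set cellsA"
    unfolding cellZ_def emb_empty zA sc_simps by auto
  have G36: "cellZ L2A 0 0 1 1 = {} \<or> cellZ L2A 0 0 1 1 \<in> set cellsA"
    unfolding cellZ_def emb_empty zA sc_simps by auto
  have G37: "cellZ L2A 0 1 (-1) 0 = {} \<or> cellZ L2A 0 1 (-1) 0 \<in> set cellsA"
    unfolding cellZ_def emb_empty zA sc_simps by auto
  have G38: "cellZ L2A 0 1 (-1) 1 = {} \<or> cellZ L2A 0 1 (-1) 1 \<in> set cellsA"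
    unfolding cellZ_def emb_empty zA sc_simps by auto
  have G39: "cellZ L2A 0 1 0 0 = {} \<or> cellZ L2A 0 1 0 0 \<in> set cellsA"
    unfolding cellZ_def emb_empty zA sc_simps by auto
  have G40: "cellZ L2A 0 1 0 1 = {} \<or> cellZ L2A 0 1 0 1 \<in> set cellsA"
    unfolding cellZ_def emb_empty zA sc_simps by auto
  have G41: "cellZ L2A 0 1 1 0 = {} \<or> cellZ L2A 0 1 1 0 \<in> set cellsA"
    unfolding cellZ_def emb_empty zA sc_simps by auto
  have G42: "cellZ L2A 0 1 1 1 = {} \<or> cellZ L2A 0 1 1 1 \<in> set cellsA"
    unfolding cellZ_def emb_empty zA sc_simps by auto
  have G43: "cellZ L2A (-1) (-1) 1 (-1) = {} \<or> cellZ L2A (-1) (-1) 1 (-1) \<in> set cellsA" using RA14 by (rule disjI2)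
  have G44: "cellZ L2A (-1) 1 (-1) (-1) = {} \<or> cellZ L2A (-1) 1 (-1) (-1) \<in> set cellsA" using RA13 by (rule disjI2)
  have G45: "cellZ L2A 0 (-1) (-1) (-1) = {} \<or> cellZ L2A 0 (-1) (-1) (-1) \<in> set cellsA" using RA1 by (rule disjI2)
  have E46: "cellZ L2A 0 1 1 (-1) = cellZ L2A 0 (-1) (-1) (-1)" unfolding cellZ_def emb_eq zA sc_simps by auto
  have G46: "cellZ L2A 0 1 1 (-1) = {} \<or> cellZ L2A 0 1 1 (-1) \<in> set cellsA" unfolding E46 using RA1 by (rule disjI2)
  have E47: "cellZ L2A 0 (-1) 0 (-1) = cellZ L2A 0 (-1) (-1) (-1)" unfolding cellZ_def emb_eq zA sc_simps by auto
  have G47: "cellZ L2A 0 (-1) 0 (-1) = {} \<or> cellZ L2A 0 (-1) 0 (-1) \<in> set cellsA" unfolding E47 using RA1 by (rule disjI2)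
  have E48: "cellZ L2A 0 0 (-1) (-1) = cellZ L2A 0 (-1) (-1) (-1)" unfolding cellZ_def emb_eq zA sc_simps by auto
  have G48: "cellZ L2A 0 0 (-1) (-1) = {} \<or> cellZ L2A 0 0 (-1) (-1) \<in> set cellsA" unfolding E48 using RA1 by (rule disjI2)
  have E49: "cellZ L2A 0 0 1 (-1) = cellZ L2A 0 (-1) (-1) (-1)" unfolding cellZ_def emb_eq zA sc_simps by auto
  have G49: "cellZ L2A 0 0 1 (-1) = {} \<or> cellZ L2A 0 0 1 (-1) \<in> set cellsA" unfolding E49 using RA1 by (rule disjI2)
  have E50: "cellZ L2A 0 1 0 (-1) = cellZ L2A 0 (-1) (-1) (-1)" unfolding cellZ_def emb_eq zA sc_simps by auto
  have G50: "cellZ L2A 0 1 0 (-1) = {} \<or> cellZ L2A 0 1 0 (-1) \<in> set cellsA" unfolding E50 using RA1 by (rule disjI2)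
  have E51: "cellZ L2A 0 0 0 (-1) = cellZ L2A 0 (-1) (-1) (-1)" unfolding cellZ_def emb_eq zA sc_simps by auto
  have G51: "cellZ L2A 0 0 0 (-1) = {} \<or> cellZ L2A 0 0 0 (-1) \<in> set cellsA" unfolding E51 using RA1 by (rule disjI2)
  have G52: "cellZ L2A 0 (-1) 1 (-1) = {} \<or> cellZ L2A 0 (-1) 1 (-1) \<in> set cellsA" using RA2 by (rule disjI2)
  have G53: "cellZ L2A 0 1 (-1) (-1) = {} \<or> cellZ L2A 0 1 (-1) (-1) \<in> set cellsA" using RA3 by (rule disjI2)
  have G54: "cellZ L2A 1 (-1) (-1) (-1) = {} \<or> cellZ L2A 1 (-1) (-1) (-1) \<in> set cellsA" using RA4 by (rule disjI2)
  have E55: "cellZ L2A 1 1 1 (-1) = cellZ L2A 1 (-1) (-1) (-1)" unfolding cellZ_def emb_eq zA sc_simps by auto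
  have G55: "cellZ L2A 1 1 1 (-1) = {} \<or> cellZ L2A 1 1 1 (-1) \<in> set cellsA" unfolding E55 using RA4 by (rule disjI2)
  have E56: "cellZ L2A 1 (-1) 0 (-1) = cellZ L2A 1 (-1) (-1) (-1)" unfolding cellZ_def emb_eq zA sc_simps by auto
  have G56: "cellZ L2A 1 (-1) 0 (-1) = {} \<or> cellZ L2A 1 (-1) 0 (-1) \<in> set cellsA" unfolding E56 using RA4 by (rule disjI2)
  have E57: "cellZ L2A 1 0 (-1) (-1) = cellZ L2A 1 (-1) (-1) (-1)" unfolding cellZ_def emb_eq zA sc_simps by auto
  have G57: "cellZ L2A 1 0 (-1) (-1) = {} \<or> cellZ L2A 1 0 (-1) (-1) \<in> set cellsA" unfolding E57 using RA4 by (rule disjI2)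
  have E58: "cellZ L2A 1 0 1 (-1) = cellZ L2A 1 (-1) (-1) (-1)" unfolding cellZ_def emb_eq zA sc_simps by auto
  have G58: "cellZ L2A 1 0 1 (-1) = {} \<or> cellZ L2A 1 0 1 (-1) \<in> set cellsA" unfolding E58 using RA4 by (rule disjI2)
  have E59: "cellZ L2A 1 1 0 (-1) = cellZ L2A 1 (-1) (-1) (-1)" unfolding cellZ_def emb_eq zA sc_simps by auto
  have G59: "cellZ L2A 1 1 0 (-1) = {} \<or> cellZ L2A 1 1 0 (-1) \<in> set cellsA" unfolding E59 using RA4 by (rule disjI2)
  have E60: "cellZ L2A 1 0 0 (-1) = cellZ L2A 1 (-1) (-1) (-1)" unfolding cellZ_def emb_eq zA sc_simps by auto
  have G60: "cellZ L2A 1 0 0 (-1) = {} \<or> cellZ L2A 1 0 0 (-1) \<in> set cellsA" unfolding E60 using RA4 by (rule disjI2)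
  have G61: "cellZ L2A 1 (-1) (-1) 0 = {} \<or> cellZ L2A 1 (-1) (-1) 0 \<in> set cellsA" using RA5 by (rule disjI2)
  have E62: "cellZ L2A 1 1 1 0 = cellZ L2A 1 (-1) (-1) 0" unfolding cellZ_def emb_eq zA sc_simps by auto
  have G62: "cellZ L2A 1 1 1 0 = {} \<or> cellZ L2A 1 1 1 0 \<in> set cellsA" unfolding E62 using RA5 by (rule disjI2)
  have E63: "cellZ L2A 1 (-1) 0 0 = cellZ L2A 1 (-1) (-1) 0" unfolding cellZ_def emb_eq zA sc_simps by auto
  have G63: "cellZ L2A 1 (-1) 0 0 = {} \<or> cellZ L2A 1 (-1) 0 0 \<in> set cellsA" unfolding E63 using RA5 by (rule disjI2)
  have E64: "cellZ L2A 1 0 (-1) 0 = cellZ L2A 1 (-1) (-1) 0" unfolding cellZ_def emb_eq zA sc_simps by auto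
  have G64: "cellZ L2A 1 0 (-1) 0 = {} \<or> cellZ L2A 1 0 (-1) 0 \<in> set cellsA" unfolding E64 using RA5 by (rule disjI2)
  have E65: "cellZ L2A 1 0 1 0 = cellZ L2A 1 (-1) (-1) 0" unfolding cellZ_def emb_eq zA sc_simps by auto
  have G65: "cellZ L2A 1 0 1 0 = {} \<or> cellZ L2A 1 0 1 0 \<in> set cellsA" unfolding E65 using RA5 by (rule disjI2)
  have E66: "cellZ L2A 1 1 0 0 = cellZ L2A 1 (-1) (-1) 0" unfolding cellZ_def emb_eq zA sc_simps by auto
  have G66: "cellZ L2A 1 1 0 0 = {} \<or> cellZ L2A 1 1 0 0 \<in> set cellsA" unfolding E66 using RA5 by (rule disjI2)
  have E67: "cellZ L2A 1 0 0 0 = cellZ L2A 1 (-1) (-1) 0" unfolding cellZ_def emb_eq zA sc_simps by auto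
  have G67: "cellZ L2A 1 0 0 0 = {} \<or> cellZ L2A 1 0 0 0 \<in> set cellsA" unfolding E67 using RA5 by (rule disjI2)
  have G68: "cellZ L2A 1 (-1) (-1) 1 = {} \<or> cellZ L2A 1 (-1) (-1) 1 \<in> set cellsA" using RA6 by (rule disjI2)
  have E69: "cellZ L2A 1 1 1 1 = cellZ L2A 1 (-1) (-1) 1" unfolding cellZ_def emb_eq zA sc_simps by auto
  have G69: "cellZ L2A 1 1 1 1 = {} \<or> cellZ L2A 1 1 1 1 \<in> set cellsA" unfolding E69 using RA6 by (rule disjI2)
  have E70: "cellZ L2A 1 (-1) 0 1 = cellZ L2A 1 (-1) (-1) 1" unfolding cellZ_def emb_eq zA sc_simps by auto
  have G70: "cellZ L2A 1 (-1) 0 1 = {} \<or> cellZ L2A 1 (-1) 0 1 \<in> set cellsA" unfolding E70 using RA6 by (rule disjI2)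
  have E71: "cellZ L2A 1 0 (-1) 1 = cellZ L2A 1 (-1) (-1) 1" unfolding cellZ_def emb_eq zA sc_simps by auto
  have G71: "cellZ L2A 1 0 (-1) 1 = {} \<or> cellZ L2A 1 0 (-1) 1 \<in> set cellsA" unfolding E71 using RA6 by (rule disjI2)
  have E72: "cellZ L2A 1 0 1 1 = cellZ L2A 1 (-1) (-1) 1" unfolding cellZ_def emb_eq zA sc_simps by auto
  have G72: "cellZ L2A 1 0 1 1 = {} \<or> cellZ L2A 1 0 1 1 \<in> set cellsA" unfolding E72 using RA6 by (rule disjI2)
  have E73: "cellZ L2A 1 1 0 1 = cellZ L2A 1 (-1) (-1) 1" unfolding cellZ_def emb_eq zA sc_simps by auto
  have G73: "cellZ L2A 1 1 0 1 = {} \<or> cellZ L2A 1 1 0 1 \<in> set cellsA" unfolding E73 using RA6 by (rule disjI2)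
  have E74: "cellZ L2A 1 0 0 1 = cellZ L2A 1 (-1) (-1) 1" unfolding cellZ_def emb_eq zA sc_simps by auto
  have G74: "cellZ L2A 1 0 0 1 = {} \<or> cellZ L2A 1 0 0 1 \<in> set cellsA" unfolding E74 using RA6 by (rule disjI2)
  have G75: "cellZ L2A 1 (-1) 1 (-1) = {} \<or> cellZ L2A 1 (-1) 1 (-1) \<in> set cellsA" using RA12 by (rule disjI2)
  have G76: "cellZ L2A 1 (-1) 1 0 = {} \<or> cellZ L2A 1 (-1) 1 0 \<in> set cellsA" using RA7 by (rule disjI2)
  have G77: "cellZ L2A 1 (-1) 1 1 = {} \<or> cellZ L2A 1 (-1) 1 1 \<in> set cellsA" using RA11 by (rule disjI2)
  have G78: "cellZ L2A 1 1 (-1) (-1) = {} \<or> cellZ L2A 1 1 (-1) (-1) \<in> set cellsA" using RA10 by (rule disjI2)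
  have G79: "cellZ L2A 1 1 (-1) 0 = {} \<or> cellZ L2A 1 1 (-1) 0 \<in> set cellsA" using RA8 by (rule disjI2)
  have G80: "cellZ L2A 1 1 (-1) 1 = {} \<or> cellZ L2A 1 1 (-1) 1 \<in> set cellsA" using RA9 by (rule disjI2)
  have "\<forall>a\<in>{-1,0,1}. \<forall>b\<in>{-1,0,1}. \<forall>c\<in>{-1,0,1}. \<forall>d\<in>{-1,0,1}. cellZ L2A a b c d = {} \<or> cellZ L2A a b c d \<in> set cellsA"
    by (simp only: ball_simps(5,7) G0 G1 G2 G3 G4 G5 G6 G7 G8 G9 G10 G11 G12 G13 G14 G15 G16 G17 G18 G19 G20 G21 G22 G23 G24 G25 G26 G27 G28 G29 G30 G31 G32 G33 G34 G35 G36 G37 G38 G39 G40 G41 G42 G43 G44 G45 G46 G47 G48 G49 G50 G51 G52 G53 G54 G55 G56 G57 G58 G59 G60 G61 G62 G63 G64 G65 G66 G67 G68 G69 G70 G71 G72 G73 G74 G75 G76 G77 G78 G79 G80 simp_thms)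
  then show ?thesis using assms by blast
qed
lemma WA0: "mkpt (-3/2) 0 \<in> cellZ L2A (-1) (-1) (-1) (-1)" by (simp add: cellZ_def zA sc_simps)
lemma MA0: "cellZ L2A (-1) (-1) (-1) (-1) \<in> {D. D \<noteq> {} \<and> (\<exists>a b c d. a \<in> {-1,0,1} \<and> b \<in> {-1,0,1} \<and> c \<in> {-1,0,1} \<and> d \<in> {-1,0,1} \<and> D = cellZ L2A a b c d)}"
  apply (simp only: mem_Collect_eq, rule conjI)
  using WA0 apply blast
  by (rule exI[of _ "(-1)"], rule exI[of _ "(-1)"], rule exI[of _ "(-1)"], rule exI[of _ "(-1)"]) simp
lemma WA1: "mkpt 0 0 \<in> cellZ L2A 0 (-1) (-1) (-1)" by (simp add: cellZ_def zA sc_simps)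
lemma MA1: "cellZ L2A 0 (-1) (-1) (-1) \<in> {D. D \<noteq> {} \<and> (\<exists>a b c d. a \<in> {-1,0,1} \<and> b \<in> {-1,0,1} \<and> c \<in> {-1,0,1} \<and> d \<in> {-1,0,1} \<and> D = cellZ L2A a b c d)}"
  apply (simp only: mem_Collect_eq, rule conjI)
  using WA1 apply blast
  by (rule exI[of _ "0"], rule exI[of _ "(-1)"], rule exI[of _ "(-1)"], rule exI[of _ "(-1)"]) simp
lemma WA2: "mkpt 0 (-3/2) \<in> cellZ L2A 0 (-1) 1 (-1)" by (simp add: cellZ_def zA sc_simps)
lemma MA2: "cellZ L2A 0 (-1) 1 (-1) \<in> {D. D \<noteq> {} \<and> (\<exists>a b c d. a \<in> {-1,0,1} \<and> b \<in> {-1,0,1} \<and> c \<in> {-1,0,1} \<and> d \<in> {-1,0,1} \<and> D = cellZ L2A a b c d)}"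
  apply (simp only: mem_Collect_eq, rule conjI)
  using WA2 apply blast
  by (rule exI[of _ "0"], rule exI[of _ "(-1)"], rule exI[of _ "1"], rule exI[of _ "(-1)"]) simp
lemma WA3: "mkpt 0 (3/2) \<in> cellZ L2A 0 1 (-1) (-1)" by (simp add: cellZ_def zA sc_simps)
lemma MA3: "cellZ L2A 0 1 (-1) (-1) \<in> {D. D \<noteq> {} \<and> (\<exists>a b c d. a \<in> {-1,0,1} \<and> b \<in> {-1,0,1} \<and> c \<in> {-1,0,1} \<and> d \<in> {-1,0,1} \<and> D = cellZ L2A a b c d)}"
  apply (simp only: mem_Collect_eq, rule conjI)
  using WA3 apply blast
  by (rule exI[of _ "0"], rule exI[of _ "1"], rule exI[of _ "(-1)"], rule exI[of _ "(-1)"]) simp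
lemma WA4: "mkpt (1/2) 0 \<in> cellZ L2A 1 (-1) (-1) (-1)" by (simp add: cellZ_def zA sc_simps)
lemma MA4: "cellZ L2A 1 (-1) (-1) (-1) \<in> {D. D \<noteq> {} \<and> (\<exists>a b c d. a \<in> {-1,0,1} \<and> b \<in> {-1,0,1} \<and> c \<in> {-1,0,1} \<and> d \<in> {-1,0,1} \<and> D = cellZ L2A a b c d)}"
  apply (simp only: mem_Collect_eq, rule conjI)
  using WA4 apply blast
  by (rule exI[of _ "1"], rule exI[of _ "(-1)"], rule exI[of _ "(-1)"], rule exI[of _ "(-1)"]) simp
lemma WA5: "mkpt 1 0 \<in> cellZ L2A 1 (-1) (-1) 0" by (simp add: cellZ_def zA sc_simps)
lemma MA5: "cellZ L2A 1 (-1) (-1) 0 \<in> {D. D \<noteq> {} \<and> (\<exists>a b c d. a \<in> {-1,0,1} \<and> b \<in> {-1,0,1} \<and> c \<in> {-1,0,1} \<and> d \<in> {-1,0,1} \<and> D = cellZ L2A a b c d)}"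
  apply (simp only: mem_Collect_eq, rule conjI)
  using WA5 apply blast
  by (rule exI[of _ "1"], rule exI[of _ "(-1)"], rule exI[of _ "(-1)"], rule exI[of _ "0"]) simp
lemma WA6: "mkpt 2 0 \<in> cellZ L2A 1 (-1) (-1) 1" by (simp add: cellZ_def zA sc_simps)
lemma MA6: "cellZ L2A 1 (-1) (-1) 1 \<in> {D. D \<noteq> {} \<and> (\<exists>a b c d. a \<in> {-1,0,1} \<and> b \<in> {-1,0,1} \<and> c \<in> {-1,0,1} \<and> d \<in> {-1,0,1} \<and> D = cellZ L2A a b c d)}"
  apply (simp only: mem_Collect_eq, rule conjI)
  using WA6 apply blast
  by (rule exI[of _ "1"], rule exI[of _ "(-1)"], rule exI[of _ "(-1)"], rule exI[of _ "1"]) simp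
lemma WA7: "mkpt 1 (-3/2) \<in> cellZ L2A 1 (-1) 1 0" by (simp add: cellZ_def zA sc_simps)
lemma MA7: "cellZ L2A 1 (-1) 1 0 \<in> {D. D \<noteq> {} \<and> (\<exists>a b c d. a \<in> {-1,0,1} \<and> b \<in> {-1,0,1} \<and> c \<in> {-1,0,1} \<and> d \<in> {-1,0,1} \<and> D = cellZ L2A a b c d)}"
  apply (simp only: mem_Collect_eq, rule conjI)
  using WA7 apply blast
  by (rule exI[of _ "1"], rule exI[of _ "(-1)"], rule exI[of _ "1"], rule exI[of _ "0"]) simp
lemma WA8: "mkpt 1 (3/2) \<in> cellZ L2A 1 1 (-1) 0" by (simp add: cellZ_def zA sc_simps)
lemma MA8: "cellZ L2A 1 1 (-1) 0 \<in> {D. D \<noteq> {} \<and> (\<exists>a b c d. a \<in> {-1,0,1} \<and> b \<in> {-1,0,1} \<and> c \<in> {-1,0,1} \<and> d \<in> {-1,0,1} \<and> D = cellZ L2A a b c d)}"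
  apply (simp only: mem_Collect_eq, rule conjI)
  using WA8 apply blast
  by (rule exI[of _ "1"], rule exI[of _ "1"], rule exI[of _ "(-1)"], rule exI[of _ "0"]) simp
lemma WA9: "mkpt 2 (3/2) \<in> cellZ L2A 1 1 (-1) 1" by (simp add: cellZ_def zA sc_simps)
lemma MA9: "cellZ L2A 1 1 (-1) 1 \<in> {D. D \<noteq> {} \<and> (\<exists>a b c d. a \<in> {-1,0,1} \<and> b \<in> {-1,0,1} \<and> c \<in> {-1,0,1} \<and> d \<in> {-1,0,1} \<and> D = cellZ L2A a b c d)}"
  apply (simp only: mem_Collect_eq, rule conjI)
  using WA9 apply blast
  by (rule exI[of _ "1"], rule exI[of _ "1"], rule exI[of _ "(-1)"], rule exI[of _ "1"]) simp
lemma WA10: "mkpt (1/2) (3/2) \<in> cellZ L2A 1 1 (-1) (-1)" by (simp add: cellZ_def zA sc_simps)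
lemma MA10: "cellZ L2A 1 1 (-1) (-1) \<in> {D. D \<noteq> {} \<and> (\<exists>a b c d. a \<in> {-1,0,1} \<and> b \<in> {-1,0,1} \<and> c \<in> {-1,0,1} \<and> d \<in> {-1,0,1} \<and> D = cellZ L2A a b c d)}"
  apply (simp only: mem_Collect_eq, rule conjI)
  using WA10 apply blast
  by (rule exI[of _ "1"], rule exI[of _ "1"], rule exI[of _ "(-1)"], rule exI[of _ "(-1)"]) simp
lemma WA11: "mkpt 2 (-3/2) \<in> cellZ L2A 1 (-1) 1 1" by (simp add: cellZ_def zA sc_simps)
lemma MA11: "cellZ L2A 1 (-1) 1 1 \<in> {D. D \<noteq> {} \<and> (\<exists>a b c d. a \<in> {-1,0,1} \<and> b \<in> {-1,0,1} \<and> c \<in> {-1,0,1} \<and> d \<in> {-1,0,1} \<and> D = cellZ L2A a b c d)}"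
  apply (simp only: mem_Collect_eq, rule conjI)
  using WA11 apply blast
  by (rule exI[of _ "1"], rule exI[of _ "(-1)"], rule exI[of _ "1"], rule exI[of _ "1"]) simp
lemma WA12: "mkpt (1/2) (-3/2) \<in> cellZ L2A 1 (-1) 1 (-1)" by (simp add: cellZ_def zA sc_simps)
lemma MA12: "cellZ L2A 1 (-1) 1 (-1) \<in> {D. D \<noteq> {} \<and> (\<exists>a b c d. a \<in> {-1,0,1} \<and> b \<in> {-1,0,1} \<and> c \<in> {-1,0,1} \<and> d \<in> {-1,0,1} \<and> D = cellZ L2A a b c d)}"
  apply (simp only: mem_Collect_eq, rule conjI)
  using WA12 apply blast
  by (rule exI[of _ "1"], rule exI[of _ "(-1)"], rule exI[of _ "1"], rule exI[of _ "(-1)"]) simp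
lemma WA13: "mkpt (-3/2) (3/2) \<in> cellZ L2A (-1) 1 (-1) (-1)" by (simp add: cellZ_def zA sc_simps)
lemma MA13: "cellZ L2A (-1) 1 (-1) (-1) \<in> {D. D \<noteq> {} \<and> (\<exists>a b c d. a \<in> {-1,0,1} \<and> b \<in> {-1,0,1} \<and> c \<in> {-1,0,1} \<and> d \<in> {-1,0,1} \<and> D = cellZ L2A a b c d)}"
  apply (simp only: mem_Collect_eq, rule conjI)
  using WA13 apply blast
  by (rule exI[of _ "(-1)"], rule exI[of _ "1"], rule exI[of _ "(-1)"], rule exI[of _ "(-1)"]) simp
lemma WA14: "mkpt (-3/2) (-3/2) \<in> cellZ L2A (-1) (-1) 1 (-1)" by (simp add: cellZ_def zA sc_simps)
lemma MA14: "cellZ L2A (-1) (-1) 1 (-1) \<in> {D. D \<noteq> {} \<and> (\<exists>a b c d. a \<in> {-1,0,1} \<and> b \<in> {-1,0,1} \<and> c \<in> {-1,0,1} \<and> d \<in> {-1,0,1} \<and> D = cellZ L2A a b c d)}"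
  apply (simp only: mem_Collect_eq, rule conjI)
  using WA14 apply blast
  by (rule exI[of _ "(-1)"], rule exI[of _ "(-1)"], rule exI[of _ "1"], rule exI[of _ "(-1)"]) simp
lemma canonA: "canonical_complex nsx [L1, L2A, L3] = set cellsA"
  unfolding canon3 canon2
proof
  show "{D. D \<noteq> {} \<and> (\<exists>a b c d. a \<in> {-1,0,1} \<and> b \<in> {-1,0,1} \<and> c \<in> {-1,0,1} \<and> d \<in> {-1,0,1} \<and> D = cellZ L2A a b c d)} \<subseteq> set cellsA"
  proof
    fix D assume "D \<in> {D. D \<noteq> {} \<and> (\<exists>a b c d. a \<in> {-1,0,1} \<and> b \<in> {-1,0,1} \<and> c \<in> {-1,0,1} \<and> d \<in> {-1,0,1} \<and> D = cellZ L2A a b c d)}"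
    then obtain a b c d where D: "D \<noteq> {}" "a \<in> {-1,0,1}" "b \<in> {-1,0,1}" "c \<in> {-1,0,1}" "d \<in> {-1,0,1}" "D = cellZ L2A a b c d" by blast
    show "D \<in> set cellsA" using allA[OF D(2-5)] D(1,6) by simp
  qed
  show "set cellsA \<subseteq> {D. D \<noteq> {} \<and> (\<exists>a b c d. a \<in> {-1,0,1} \<and> b \<in> {-1,0,1} \<and> c \<in> {-1,0,1} \<and> d \<in> {-1,0,1} \<and> D = cellZ L2A a b c d)}"
    by (simp only: cellsA_def list.set insert_subset empty_subsetI simp_thms MA0 MA1 MA2 MA3 MA4 MA5 MA6 MA7 MA8 MA9 MA10 MA11 MA12 MA13 MA14)
qed
lemma DA0: "cell_dim (cellZ L2A (-1) (-1) (-1) (-1)) \<noteq> 2"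
proof -
  have "cellZ L2A (-1) (-1) (-1) (-1) \<subseteq> emb (\<lambda>x y. 0 * x + 1 * y = 0)"
    unfolding cellZ_def by (rule emb_mono) (auto simp: zA sc_simps)
  then have "cell_dim (cellZ L2A (-1) (-1) (-1) (-1)) \<le> 1" by (rule lowdim) simp
  then show ?thesis by simp
qed
lemma DA1: "cell_dim (cellZ L2A 0 (-1) (-1) (-1)) \<noteq> 2"
proof -
  have "cellZ L2A 0 (-1) (-1) (-1) \<subseteq> emb (\<lambda>x y. 1 * x + 0 * y = 0)"
    unfolding cellZ_def by (rule emb_mono) (auto simp: zA sc_simps)
  then have "cell_dim (cellZ L2A 0 (-1) (-1) (-1)) \<le> 1" by (rule lowdim) simp
  then show ?thesis by simp
qed
lemma DA2: "cell_dim (cellZ L2A 0 (-1) 1 (-1)) \<noteq> 2"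
proof -
  have "cellZ L2A 0 (-1) 1 (-1) \<subseteq> emb (\<lambda>x y. 1 * x + 0 * y = 0)"
    unfolding cellZ_def by (rule emb_mono) (auto simp: zA sc_simps)
  then have "cell_dim (cellZ L2A 0 (-1) 1 (-1)) \<le> 1" by (rule lowdim) simp
  then show ?thesis by simp
qed
lemma DA3: "cell_dim (cellZ L2A 0 1 (-1) (-1)) \<noteq> 2"
proof -
  have "cellZ L2A 0 1 (-1) (-1) \<subseteq> emb (\<lambda>x y. 1 * x + 0 * y = 0)"
    unfolding cellZ_def by (rule emb_mono) (auto simp: zA sc_simps)
  then have "cell_dim (cellZ L2A 0 1 (-1) (-1)) \<le> 1" by (rule lowdim) simp
  then show ?thesis by simp
qed
lemma DA4: "cell_dim (cellZ L2A 1 (-1) (-1) (-1)) \<noteq> 2"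
proof -
  have "cellZ L2A 1 (-1) (-1) (-1) \<subseteq> emb (\<lambda>x y. 0 * x + 1 * y = 0)"
    unfolding cellZ_def by (rule emb_mono) (auto simp: zA sc_simps)
  then have "cell_dim (cellZ L2A 1 (-1) (-1) (-1)) \<le> 1" by (rule lowdim) simp
  then show ?thesis by simp
qed
lemma DA5: "cell_dim (cellZ L2A 1 (-1) (-1) 0) \<noteq> 2"
proof -
  have "cellZ L2A 1 (-1) (-1) 0 \<subseteq> emb (\<lambda>x y. 0 * x + 1 * y = 0)"
    unfolding cellZ_def by (rule emb_mono) (auto simp: zA sc_simps)
  then have "cell_dim (cellZ L2A 1 (-1) (-1) 0) \<le> 1" by (rule lowdim) simp
  then show ?thesis by simp
qed
lemma DA6: "cell_dim (cellZ L2A 1 (-1) (-1) 1) \<noteq> 2"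
proof -
  have "cellZ L2A 1 (-1) (-1) 1 \<subseteq> emb (\<lambda>x y. 0 * x + 1 * y = 0)"
    unfolding cellZ_def by (rule emb_mono) (auto simp: zA sc_simps)
  then have "cell_dim (cellZ L2A 1 (-1) (-1) 1) \<le> 1" by (rule lowdim) simp
  then show ?thesis by simp
qed
lemma DA7: "cell_dim (cellZ L2A 1 (-1) 1 0) \<noteq> 2"
proof -
  have "cellZ L2A 1 (-1) 1 0 \<subseteq> emb (\<lambda>x y. 1 * x + 0 * y = 1)"
    unfolding cellZ_def by (rule emb_mono) (auto simp: zA sc_simps)
  then have "cell_dim (cellZ L2A 1 (-1) 1 0) \<le> 1" by (rule lowdim) simp
  then show ?thesis by simp
qed
lemma DA8: "cell_dim (cellZ L2A 1 1 (-1) 0) \<noteq> 2"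
proof -
  have "cellZ L2A 1 1 (-1) 0 \<subseteq> emb (\<lambda>x y. 1 * x + 0 * y = 1)"
    unfolding cellZ_def by (rule emb_mono) (auto simp: zA sc_simps)
  then have "cell_dim (cellZ L2A 1 1 (-1) 0) \<le> 1" by (rule lowdim) simp
  then show ?thesis by simp
qed
lemma SA0: "cell_dim (cellZ L2A 1 1 (-1) 1) = 2 \<and> sign_seq nsx [L1, L2A, L3] (cellZ L2A 1 1 (-1) 1) = [1, 1, (-1), 1, -1] @ GG"
proof -
  have sq: "\<And>x y. \<bar>x - 2\<bar> < 1/4 \<Longrightarrow> \<bar>y - 1\<bar> < 1/4 \<Longrightarrow> mkpt x y \<in> cellZ L2A 1 1 (-1) 1"
    unfolding abs_less_iff by (simp add: cellZ_def zA sc_simps max_def)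
  have "cell_dim (cellZ L2A 1 1 (-1) 1) = 2 \<and> sign_seq nsx [L1, L2A, L3] (cellZ L2A 1 1 (-1) 1) = [of_int 1, of_int 1, of_int (-1), of_int 1, -1] @ GG"
    by (rule seq_full[of _ _ _ _ _ "1/4" "2" "1"]) (use ZpA sq in auto)
  then show ?thesis by simp
qed
lemma SA1: "cell_dim (cellZ L2A 1 1 (-1) (-1)) = 2 \<and> sign_seq nsx [L1, L2A, L3] (cellZ L2A 1 1 (-1) (-1)) = [1, 1, (-1), (-1), -1] @ GG"
proof -
  have sq: "\<And>x y. \<bar>x - (1/2)\<bar> < 1/4 \<Longrightarrow> \<bar>y - 1\<bar> < 1/4 \<Longrightarrow> mkpt x y \<in> cellZ L2A 1 1 (-1) (-1)"
    unfolding abs_less_iff by (simp add: cellZ_def zA sc_simps max_def)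
  have "cell_dim (cellZ L2A 1 1 (-1) (-1)) = 2 \<and> sign_seq nsx [L1, L2A, L3] (cellZ L2A 1 1 (-1) (-1)) = [of_int 1, of_int 1, of_int (-1), of_int (-1), -1] @ GG"
    by (rule seq_full[of _ _ _ _ _ "1/4" "(1/2)" "1"]) (use ZpA sq in auto)
  then show ?thesis by simp
qed
lemma SA2: "cell_dim (cellZ L2A 1 (-1) 1 1) = 2 \<and> sign_seq nsx [L1, L2A, L3] (cellZ L2A 1 (-1) 1 1) = [1, (-1), 1, 1, -1] @ GG"
proof -
  have sq: "\<And>x y. \<bar>x - 2\<bar> < 1/4 \<Longrightarrow> \<bar>y - (-1)\<bar> < 1/4 \<Longrightarrow> mkpt x y \<in> cellZ L2A 1 (-1) 1 1"
    unfolding abs_less_iff by (simp add: cellZ_def zA sc_simps max_def)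
  have "cell_dim (cellZ L2A 1 (-1) 1 1) = 2 \<and> sign_seq nsx [L1, L2A, L3] (cellZ L2A 1 (-1) 1 1) = [of_int 1, of_int (-1), of_int 1, of_int 1, -1] @ GG"
    by (rule seq_full[of _ _ _ _ _ "1/4" "2" "(-1)"]) (use ZpA sq in auto)
  then show ?thesis by simp
qed
lemma SA3: "cell_dim (cellZ L2A 1 (-1) 1 (-1)) = 2 \<and> sign_seq nsx [L1, L2A, L3] (cellZ L2A 1 (-1) 1 (-1)) = [1, (-1), 1, (-1), -1] @ GG"
proof -
  have sq: "\<And>x y. \<bar>x - (1/2)\<bar> < 1/4 \<Longrightarrow> \<bar>y - (-1)\<bar> < 1/4 \<Longrightarrow> mkpt x y \<in> cellZ L2A 1 (-1) 1 (-1)"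
    unfolding abs_less_iff by (simp add: cellZ_def zA sc_simps max_def)
  have "cell_dim (cellZ L2A 1 (-1) 1 (-1)) = 2 \<and> sign_seq nsx [L1, L2A, L3] (cellZ L2A 1 (-1) 1 (-1)) = [of_int 1, of_int (-1), of_int 1, of_int (-1), -1] @ GG"
    by (rule seq_full[of _ _ _ _ _ "1/4" "(1/2)" "(-1)"]) (use ZpA sq in auto)
  then show ?thesis by simp
qed
lemma SA4: "cell_dim (cellZ L2A (-1) 1 (-1) (-1)) = 2 \<and> sign_seq nsx [L1, L2A, L3] (cellZ L2A (-1) 1 (-1) (-1)) = [(-1), 1, (-1), (-1), -1] @ GG"
proof -
  have sq: "\<And>x y. \<bar>x - (-1)\<bar> < 1/4 \<Longrightarrow> \<bar>y - 1\<bar> < 1/4 \<Longrightarrow> mkpt x y \<in> cellZ L2A (-1) 1 (-1) (-1)"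
    unfolding abs_less_iff by (simp add: cellZ_def zA sc_simps max_def)
  have "cell_dim (cellZ L2A (-1) 1 (-1) (-1)) = 2 \<and> sign_seq nsx [L1, L2A, L3] (cellZ L2A (-1) 1 (-1) (-1)) = [of_int (-1), of_int 1, of_int (-1), of_int (-1), -1] @ GG"
    by (rule seq_full[of _ _ _ _ _ "1/4" "(-1)" "1"]) (use ZpA sq in auto)
  then show ?thesis by simp
qed
lemma SA5: "cell_dim (cellZ L2A (-1) (-1) 1 (-1)) = 2 \<and> sign_seq nsx [L1, L2A, L3] (cellZ L2A (-1) (-1) 1 (-1)) = [(-1), (-1), 1, (-1), -1] @ GG"
proof -
  have sq: "\<And>x y. \<bar>x - (-1)\<bar> < 1/4 \<Longrightarrow> \<bar>y - (-1)\<bar> < 1/4 \<Longrightarrow> mkpt x y \<in> cellZ L2A (-1) (-1) 1 (-1)"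
    unfolding abs_less_iff by (simp add: cellZ_def zA sc_simps max_def)
  have "cell_dim (cellZ L2A (-1) (-1) 1 (-1)) = 2 \<and> sign_seq nsx [L1, L2A, L3] (cellZ L2A (-1) (-1) 1 (-1)) = [of_int (-1), of_int (-1), of_int 1, of_int (-1), -1] @ GG"
    by (rule seq_full[of _ _ _ _ _ "1/4" "(-1)" "(-1)"]) (use ZpA sq in auto)
  then show ?thesis by simp
qed
lemma patA: "{sign_seq nsx [L1, L2A, L3] C | C. C \<in> canonical_complex nsx [L1, L2A, L3] \<and> cell_dim C = nsx ! 0} = PAT"
proof
  show "{sign_seq nsx [L1, L2A, L3] C | C. C \<in> canonical_complex nsx [L1, L2A, L3] \<and> cell_dim C = nsx ! 0} \<subseteq> PAT"
  proof
    fix s assume "s \<in> {sign_seq nsx [L1, L2A, L3] C | C. C \<in> canonical_complex nsx [L1, L2A, L3] \<and> cell_dim C = nsx ! 0}"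
    then obtain C where C: "C \<in> set cellsA" "cell_dim C = 2" "s = sign_seq nsx [L1, L2A, L3] C"
      unfolding canonA by (auto simp: nsx_def)
    from C(1) have "C = cellZ L2A (-1) (-1) (-1) (-1) \<or> C = cellZ L2A 0 (-1) (-1) (-1) \<or> C = cellZ L2A 0 (-1) 1 (-1) \<or> C = cellZ L2A 0 1 (-1) (-1) \<or> C = cellZ L2A 1 (-1) (-1) (-1) \<or> C = cellZ L2A 1 (-1) (-1) 0 \<or> C = cellZ L2A 1 (-1) (-1) 1 \<or> C = cellZ L2A 1 (-1) 1 0 \<or> C = cellZ L2A 1 1 (-1) 0 \<or> C = cellZ L2A 1 1 (-1) 1 \<or> C = cellZ L2A 1 1 (-1) (-1) \<or> C = cellZ L2A 1 (-1) 1 1 \<or> C = cellZ L2A 1 (-1) 1 (-1) \<or> C = cellZ L2A (-1) 1 (-1) (-1) \<or> C = cellZ L2A (-1) (-1) 1 (-1)" by (simp add: cellsA_def)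
    then show "s \<in> PAT"
    proof (elim disjE)
      assume "C = cellZ L2A (-1) (-1) (-1) (-1)" then show ?thesis using C(2) DA0 by simp
    next
      assume "C = cellZ L2A 0 (-1) (-1) (-1)" then show ?thesis using C(2) DA1 by simp
    next
      assume "C = cellZ L2A 0 (-1) 1 (-1)" then show ?thesis using C(2) DA2 by simp
    next
      assume "C = cellZ L2A 0 1 (-1) (-1)" then show ?thesis using C(2) DA3 by simp
    next
      assume "C = cellZ L2A 1 (-1) (-1) (-1)" then show ?thesis using C(2) DA4 by simp
    next
      assume "C = cellZ L2A 1 (-1) (-1) 0" then show ?thesis using C(2) DA5 by simp
    next
      assume "C = cellZ L2A 1 (-1) (-1) 1" then show ?thesis using C(2) DA6 by simp
    next
      assume "C = cellZ L2A 1 (-1) 1 0" then show ?thesis using C(2) DA7 by simp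
    next
      assume "C = cellZ L2A 1 1 (-1) 0" then show ?thesis using C(2) DA8 by simp
    next
      assume "C = cellZ L2A 1 1 (-1) 1" then show ?thesis using C(3) SA0 by (simp add: PAT_def)
    next
      assume "C = cellZ L2A 1 1 (-1) (-1)" then show ?thesis using C(3) SA1 by (simp add: PAT_def)
    next
      assume "C = cellZ L2A 1 (-1) 1 1" then show ?thesis using C(3) SA2 by (simp add: PAT_def)
    next
      assume "C = cellZ L2A 1 (-1) 1 (-1)" then show ?thesis using C(3) SA3 by (simp add: PAT_def)
    next
      assume "C = cellZ L2A (-1) 1 (-1) (-1)" then show ?thesis using C(3) SA4 by (simp add: PAT_def)
    next
      assume "C = cellZ L2A (-1) (-1) 1 (-1)" then show ?thesis using C(3) SA5 by (simp add: PAT_def)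
    qed
  qed
  show "PAT \<subseteq> {sign_seq nsx [L1, L2A, L3] C | C. C \<in> canonical_complex nsx [L1, L2A, L3] \<and> cell_dim C = nsx ! 0}"
    unfolding PAT_def canonA
  proof (intro insert_subsetI empty_subsetI)
    show "[1, 1, (-1), 1, -1] @ GG \<in> {sign_seq nsx [L1, L2A, L3] C | C. C \<in> set cellsA \<and> cell_dim C = nsx ! 0}"
      by (intro CollectI exI[of _ "cellZ L2A 1 1 (-1) 1"]) (use SA0 RA9 in \<open>simp add: nsx_def\<close>)
  next
    show "[1, 1, (-1), (-1), -1] @ GG \<in> {sign_seq nsx [L1, L2A, L3] C | C. C \<in> set cellsA \<and> cell_dim C = nsx ! 0}"
      by (intro CollectI exI[of _ "cellZ L2A 1 1 (-1) (-1)"]) (use SA1 RA10 in \<open>simp add: nsx_def\<close>)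
  next
    show "[1, (-1), 1, 1, -1] @ GG \<in> {sign_seq nsx [L1, L2A, L3] C | C. C \<in> set cellsA \<and> cell_dim C = nsx ! 0}"
      by (intro CollectI exI[of _ "cellZ L2A 1 (-1) 1 1"]) (use SA2 RA11 in \<open>simp add: nsx_def\<close>)
  next
    show "[1, (-1), 1, (-1), -1] @ GG \<in> {sign_seq nsx [L1, L2A, L3] C | C. C \<in> set cellsA \<and> cell_dim C = nsx ! 0}"
      by (intro CollectI exI[of _ "cellZ L2A 1 (-1) 1 (-1)"]) (use SA3 RA12 in \<open>simp add: nsx_def\<close>)
  next
    show "[(-1), 1, (-1), (-1), -1] @ GG \<in> {sign_seq nsx [L1, L2A, L3] C | C. C \<in> set cellsA \<and> cell_dim C = nsx ! 0}"
      by (intro CollectI exI[of _ "cellZ L2A (-1) 1 (-1) (-1)"]) (use SA4 RA13 in \<open>simp add: nsx_def\<close>)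
  next
    show "[(-1), (-1), 1, (-1), -1] @ GG \<in> {sign_seq nsx [L1, L2A, L3] C | C. C \<in> set cellsA \<and> cell_dim C = nsx ! 0}"
      by (intro CollectI exI[of _ "cellZ L2A (-1) (-1) 1 (-1)"]) (use SA5 RA14 in \<open>simp add: nsx_def\<close>)
  qed
qed
lemma distA: "distinct cellsA"
proof -
  have "distinct (map (\<lambda>C. map (\<lambda>(x, y). mkpt x y \<in> C) [((-3/2), 0), (0, 0), (0, (-3/2)), (0, (3/2)), ((1/2), 0), (1, 0), (2, 0), (1, (-3/2)), (1, (3/2)), (2, (3/2)), ((1/2), (3/2)), (2, (-3/2)), ((1/2), (-3/2)), ((-3/2), (3/2)), ((-3/2), (-3/2))]) cellsA)"
    by (simp add: cellsA_def cellZ_def zA sc_simps)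
  then show ?thesis by (simp add: distinct_map)
qed
definition L2B :: layer where "L2B = (\<lambda>j k. if k = 0 then 1 else -1, \<lambda>j. 0)"
lemma zB: "zf L2B x y = max 0 x - max 0 y - max 0 (-y)" by (simp add: zf_def L2B_def)
lemma ZpB: "Zp L2B" unfolding Zp_def zB by (auto simp: max_def)
definition cellsB :: "point set list" where "cellsB = [cellZ L2B (-1) (-1) (-1) (-1), cellZ L2B 1 (-1) (-1) (-1), cellZ L2B 0 (-1) 1 (-1), cellZ L2B 0 1 (-1) (-1), cellZ L2B 1 (-1) (-1) 1, cellZ L2B 1 (-1) 1 0, cellZ L2B 1 1 (-1) 0, cellZ L2B 1 1 (-1) 1, cellZ L2B 1 1 (-1) (-1), cellZ L2B 1 (-1) 1 1, cellZ L2B 1 (-1) 1 (-1), cellZ L2B (-1) 1 (-1) (-1), cellZ L2B (-1) (-1) 1 (-1)]"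
lemma RB0: "cellZ L2B (-1) (-1) (-1) (-1) \<in> set cellsB" by (simp add: cellsB_def)
lemma RB1: "cellZ L2B 1 (-1) (-1) (-1) \<in> set cellsB" by (simp add: cellsB_def)
lemma RB2: "cellZ L2B 0 (-1) 1 (-1) \<in> set cellsB" by (simp add: cellsB_def)
lemma RB3: "cellZ L2B 0 1 (-1) (-1) \<in> set cellsB" by (simp add: cellsB_def)
lemma RB4: "cellZ L2B 1 (-1) (-1) 1 \<in> set cellsB" by (simp add: cellsB_def)
lemma RB5: "cellZ L2B 1 (-1) 1 0 \<in> set cellsB" by (simp add: cellsB_def)
lemma RB6: "cellZ L2B 1 1 (-1) 0 \<in> set cellsB" by (simp add: cellsB_def)
lemma RB7: "cellZ L2B 1 1 (-1) 1 \<in> set cellsB" by (simp add: cellsB_def)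
lemma RB8: "cellZ L2B 1 1 (-1) (-1) \<in> set cellsB" by (simp add: cellsB_def)
lemma RB9: "cellZ L2B 1 (-1) 1 1 \<in> set cellsB" by (simp add: cellsB_def)
lemma RB10: "cellZ L2B 1 (-1) 1 (-1) \<in> set cellsB" by (simp add: cellsB_def)
lemma RB11: "cellZ L2B (-1) 1 (-1) (-1) \<in> set cellsB" by (simp add: cellsB_def)
lemma RB12: "cellZ L2B (-1) (-1) 1 (-1) \<in> set cellsB" by (simp add: cellsB_def)
lemma allB:
  assumes "a \<in> {-1,0,1}" "b \<in> {-1,0,1}" "c \<in> {-1,0,1}" "d \<in> {-1,0,1}"
  shows "cellZ L2B a b c d = {} \<or> cellZ L2B a b c d \<in> set cellsB"
proof -
  have G0: "cellZ L2B (-1) (-1) (-1) (-1) = {} \<or> cellZ L2B (-1) (-1) (-1) (-1) \<in> set cellsB" using RB0 by (rule disjI2)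
  have E1: "cellZ L2B (-1) (-1) (-1) 1 = cellZ L2B (-1) (-1) (-1) (-1)" unfolding cellZ_def emb_eq zB sc_simps by auto
  have G1: "cellZ L2B (-1) (-1) (-1) 1 = {} \<or> cellZ L2B (-1) (-1) (-1) 1 \<in> set cellsB" unfolding E1 using RB0 by (rule disjI2)
  have E2: "cellZ L2B (-1) (-1) 1 1 = cellZ L2B (-1) (-1) (-1) (-1)" unfolding cellZ_def emb_eq zB sc_simps by auto
  have G2: "cellZ L2B (-1) (-1) 1 1 = {} \<or> cellZ L2B (-1) (-1) 1 1 \<in> set cellsB" unfolding E2 using RB0 by (rule disjI2)
  have E3: "cellZ L2B (-1) 1 (-1) 1 = cellZ L2B (-1) (-1) (-1) (-1)" unfolding cellZ_def emb_eq zB sc_simps by auto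
  have G3: "cellZ L2B (-1) 1 (-1) 1 = {} \<or> cellZ L2B (-1) 1 (-1) 1 \<in> set cellsB" unfolding E3 using RB0 by (rule disjI2)
  have E4: "cellZ L2B (-1) 1 1 (-1) = cellZ L2B (-1) (-1) (-1) (-1)" unfolding cellZ_def emb_eq zB sc_simps by auto
  have G4: "cellZ L2B (-1) 1 1 (-1) = {} \<or> cellZ L2B (-1) 1 1 (-1) \<in> set cellsB" unfolding E4 using RB0 by (rule disjI2)
  have E5: "cellZ L2B (-1) 1 1 1 = cellZ L2B (-1) (-1) (-1) (-1)" unfolding cellZ_def emb_eq zB sc_simps by auto
  have G5: "cellZ L2B (-1) 1 1 1 = {} \<or> cellZ L2B (-1) 1 1 1 \<in> set cellsB" unfolding E5 using RB0 by (rule disjI2)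
  have E6: "cellZ L2B (-1) (-1) (-1) 0 = cellZ L2B (-1) (-1) (-1) (-1)" unfolding cellZ_def emb_eq zB sc_simps by auto
  have G6: "cellZ L2B (-1) (-1) (-1) 0 = {} \<or> cellZ L2B (-1) (-1) (-1) 0 \<in> set cellsB" unfolding E6 using RB0 by (rule disjI2)
  have E7: "cellZ L2B (-1) (-1) 0 (-1) = cellZ L2B (-1) (-1) (-1) (-1)" unfolding cellZ_def emb_eq zB sc_simps by auto
  have G7: "cellZ L2B (-1) (-1) 0 (-1) = {} \<or> cellZ L2B (-1) (-1) 0 (-1) \<in> set cellsB" unfolding E7 using RB0 by (rule disjI2)
  have E8: "cellZ L2B (-1) (-1) 0 1 = cellZ L2B (-1) (-1) (-1) (-1)" unfolding cellZ_def emb_eq zB sc_simps by auto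
  have G8: "cellZ L2B (-1) (-1) 0 1 = {} \<or> cellZ L2B (-1) (-1) 0 1 \<in> set cellsB" unfolding E8 using RB0 by (rule disjI2)
  have E9: "cellZ L2B (-1) (-1) 1 0 = cellZ L2B (-1) (-1) (-1) (-1)" unfolding cellZ_def emb_eq zB sc_simps by auto
  have G9: "cellZ L2B (-1) (-1) 1 0 = {} \<or> cellZ L2B (-1) (-1) 1 0 \<in> set cellsB" unfolding E9 using RB0 by (rule disjI2)
  have E10: "cellZ L2B (-1) 0 (-1) (-1) = cellZ L2B (-1) (-1) (-1) (-1)" unfolding cellZ_def emb_eq zB sc_simps by auto
  have G10: "cellZ L2B (-1) 0 (-1) (-1) = {} \<or> cellZ L2B (-1) 0 (-1) (-1) \<in> set cellsB" unfolding E10 using RB0 by (rule disjI2)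
  have E11: "cellZ L2B (-1) 0 (-1) 1 = cellZ L2B (-1) (-1) (-1) (-1)" unfolding cellZ_def emb_eq zB sc_simps by auto
  have G11: "cellZ L2B (-1) 0 (-1) 1 = {} \<or> cellZ L2B (-1) 0 (-1) 1 \<in> set cellsB" unfolding E11 using RB0 by (rule disjI2)
  have E12: "cellZ L2B (-1) 0 1 (-1) = cellZ L2B (-1) (-1) (-1) (-1)" unfolding cellZ_def emb_eq zB sc_simps by auto
  have G12: "cellZ L2B (-1) 0 1 (-1) = {} \<or> cellZ L2B (-1) 0 1 (-1) \<in> set cellsB" unfolding E12 using RB0 by (rule disjI2)
  have E13: "cellZ L2B (-1) 0 1 1 = cellZ L2B (-1) (-1) (-1) (-1)" unfolding cellZ_def emb_eq zB sc_simps by auto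
  have G13: "cellZ L2B (-1) 0 1 1 = {} \<or> cellZ L2B (-1) 0 1 1 \<in> set cellsB" unfolding E13 using RB0 by (rule disjI2)
  have E14: "cellZ L2B (-1) 1 (-1) 0 = cellZ L2B (-1) (-1) (-1) (-1)" unfolding cellZ_def emb_eq zB sc_simps by auto
  have G14: "cellZ L2B (-1) 1 (-1) 0 = {} \<or> cellZ L2B (-1) 1 (-1) 0 \<in> set cellsB" unfolding E14 using RB0 by (rule disjI2)
  have E15: "cellZ L2B (-1) 1 0 (-1) = cellZ L2B (-1) (-1) (-1) (-1)" unfolding cellZ_def emb_eq zB sc_simps by auto
  have G15: "cellZ L2B (-1) 1 0 (-1) = {} \<or> cellZ L2B (-1) 1 0 (-1) \<in> set cellsB" unfolding E15 using RB0 by (rule disjI2)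
  have E16: "cellZ L2B (-1) 1 0 1 = cellZ L2B (-1) (-1) (-1) (-1)" unfolding cellZ_def emb_eq zB sc_simps by auto
  have G16: "cellZ L2B (-1) 1 0 1 = {} \<or> cellZ L2B (-1) 1 0 1 \<in> set cellsB" unfolding E16 using RB0 by (rule disjI2)
  have E17: "cellZ L2B (-1) 1 1 0 = cellZ L2B (-1) (-1) (-1) (-1)" unfolding cellZ_def emb_eq zB sc_simps by auto
  have G17: "cellZ L2B (-1) 1 1 0 = {} \<or> cellZ L2B (-1) 1 1 0 \<in> set cellsB" unfolding E17 using RB0 by (rule disjI2)
  have E18: "cellZ L2B (-1) (-1) 0 0 = cellZ L2B (-1) (-1) (-1) (-1)" unfolding cellZ_def emb_eq zB sc_simps by auto
  have G18: "cellZ L2B (-1) (-1) 0 0 = {} \<or> cellZ L2B (-1) (-1) 0 0 \<in> set cellsB" unfolding E18 using RB0 by (rule disjI2)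
  have E19: "cellZ L2B (-1) 0 (-1) 0 = cellZ L2B (-1) (-1) (-1) (-1)" unfolding cellZ_def emb_eq zB sc_simps by auto
  have G19: "cellZ L2B (-1) 0 (-1) 0 = {} \<or> cellZ L2B (-1) 0 (-1) 0 \<in> set cellsB" unfolding E19 using RB0 by (rule disjI2)
  have E20: "cellZ L2B (-1) 0 0 (-1) = cellZ L2B (-1) (-1) (-1) (-1)" unfolding cellZ_def emb_eq zB sc_simps by auto
  have G20: "cellZ L2B (-1) 0 0 (-1) = {} \<or> cellZ L2B (-1) 0 0 (-1) \<in> set cellsB" unfolding E20 using RB0 by (rule disjI2)
  have E21: "cellZ L2B (-1) 0 0 1 = cellZ L2B (-1) (-1) (-1) (-1)" unfolding cellZ_def emb_eq zB sc_simps by auto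
  have G21: "cellZ L2B (-1) 0 0 1 = {} \<or> cellZ L2B (-1) 0 0 1 \<in> set cellsB" unfolding E21 using RB0 by (rule disjI2)
  have E22: "cellZ L2B (-1) 0 1 0 = cellZ L2B (-1) (-1) (-1) (-1)" unfolding cellZ_def emb_eq zB sc_simps by auto
  have G22: "cellZ L2B (-1) 0 1 0 = {} \<or> cellZ L2B (-1) 0 1 0 \<in> set cellsB" unfolding E22 using RB0 by (rule disjI2)
  have E23: "cellZ L2B (-1) 1 0 0 = cellZ L2B (-1) (-1) (-1) (-1)" unfolding cellZ_def emb_eq zB sc_simps by auto
  have G23: "cellZ L2B (-1) 1 0 0 = {} \<or> cellZ L2B (-1) 1 0 0 \<in> set cellsB" unfolding E23 using RB0 by (rule disjI2)
  have E24: "cellZ L2B (-1) 0 0 0 = cellZ L2B (-1) (-1) (-1) (-1)" unfolding cellZ_def emb_eq zB sc_simps by auto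
  have G24: "cellZ L2B (-1) 0 0 0 = {} \<or> cellZ L2B (-1) 0 0 0 \<in> set cellsB" unfolding E24 using RB0 by (rule disjI2)
  have G25: "cellZ L2B (-1) (-1) 1 (-1) = {} \<or> cellZ L2B (-1) (-1) 1 (-1) \<in> set cellsB" using RB12 by (rule disjI2)
  have G26: "cellZ L2B (-1) 1 (-1) (-1) = {} \<or> cellZ L2B (-1) 1 (-1) (-1) \<in> set cellsB" using RB11 by (rule disjI2)
  have G27: "cellZ L2B 1 (-1) (-1) (-1) = {} \<or> cellZ L2B 1 (-1) (-1) (-1) \<in> set cellsB" using RB1 by (rule disjI2)
  have E28: "cellZ L2B 1 1 1 (-1) = cellZ L2B 1 (-1) (-1) (-1)" unfolding cellZ_def emb_eq zB sc_simps by auto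
  have G28: "cellZ L2B 1 1 1 (-1) = {} \<or> cellZ L2B 1 1 1 (-1) \<in> set cellsB" unfolding E28 using RB1 by (rule disjI2)
  have E29: "cellZ L2B 0 (-1) (-1) (-1) = cellZ L2B 1 (-1) (-1) (-1)" unfolding cellZ_def emb_eq zB sc_simps by auto
  have G29: "cellZ L2B 0 (-1) (-1) (-1) = {} \<or> cellZ L2B 0 (-1) (-1) (-1) \<in> set cellsB" unfolding E29 using RB1 by (rule disjI2)
  have E30: "cellZ L2B 0 (-1) (-1) 1 = cellZ L2B 1 (-1) (-1) (-1)" unfolding cellZ_def emb_eq zB sc_simps by auto
  have G30: "cellZ L2B 0 (-1) (-1) 1 = {} \<or> cellZ L2B 0 (-1) (-1) 1 \<in> set cellsB" unfolding E30 using RB1 by (rule disjI2)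
  have E31: "cellZ L2B 0 (-1) 1 1 = cellZ L2B 1 (-1) (-1) (-1)" unfolding cellZ_def emb_eq zB sc_simps by auto
  have G31: "cellZ L2B 0 (-1) 1 1 = {} \<or> cellZ L2B 0 (-1) 1 1 \<in> set cellsB" unfolding E31 using RB1 by (rule disjI2)
  have E32: "cellZ L2B 0 1 (-1) 1 = cellZ L2B 1 (-1) (-1) (-1)" unfolding cellZ_def emb_eq zB sc_simps by auto
  have G32: "cellZ L2B 0 1 (-1) 1 = {} \<or> cellZ L2B 0 1 (-1) 1 \<in> set cellsB" unfolding E32 using RB1 by (rule disjI2)
  have E33: "cellZ L2B 0 1 1 (-1) = cellZ L2B 1 (-1) (-1) (-1)" unfolding cellZ_def emb_eq zB sc_simps by auto
  have G33: "cellZ L2B 0 1 1 (-1) = {} \<or> cellZ L2B 0 1 1 (-1) \<in> set cellsB" unfolding E33 using RB1 by (rule disjI2)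
  have E34: "cellZ L2B 0 1 1 1 = cellZ L2B 1 (-1) (-1) (-1)" unfolding cellZ_def emb_eq zB sc_simps by auto
  have G34: "cellZ L2B 0 1 1 1 = {} \<or> cellZ L2B 0 1 1 1 \<in> set cellsB" unfolding E34 using RB1 by (rule disjI2)
  have E35: "cellZ L2B 1 (-1) (-1) 0 = cellZ L2B 1 (-1) (-1) (-1)" unfolding cellZ_def emb_eq zB sc_simps by auto
  have G35: "cellZ L2B 1 (-1) (-1) 0 = {} \<or> cellZ L2B 1 (-1) (-1) 0 \<in> set cellsB" unfolding E35 using RB1 by (rule disjI2)
  have E36: "cellZ L2B 1 (-1) 0 (-1) = cellZ L2B 1 (-1) (-1) (-1)" unfolding cellZ_def emb_eq zB sc_simps by auto
  have G36: "cellZ L2B 1 (-1) 0 (-1) = {} \<or> cellZ L2B 1 (-1) 0 (-1) \<in> set cellsB" unfolding E36 using RB1 by (rule disjI2)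
  have E37: "cellZ L2B 1 0 (-1) (-1) = cellZ L2B 1 (-1) (-1) (-1)" unfolding cellZ_def emb_eq zB sc_simps by auto
  have G37: "cellZ L2B 1 0 (-1) (-1) = {} \<or> cellZ L2B 1 0 (-1) (-1) \<in> set cellsB" unfolding E37 using RB1 by (rule disjI2)
  have E38: "cellZ L2B 1 0 1 (-1) = cellZ L2B 1 (-1) (-1) (-1)" unfolding cellZ_def emb_eq zB sc_simps by auto
  have G38: "cellZ L2B 1 0 1 (-1) = {} \<or> cellZ L2B 1 0 1 (-1) \<in> set cellsB" unfolding E38 using RB1 by (rule disjI2)
  have E39: "cellZ L2B 1 1 0 (-1) = cellZ L2B 1 (-1) (-1) (-1)" unfolding cellZ_def emb_eq zB sc_simps by auto
  have G39: "cellZ L2B 1 1 0 (-1) = {} \<or> cellZ L2B 1 1 0 (-1) \<in> set cellsB" unfolding E39 using RB1 by (rule disjI2)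
  have E40: "cellZ L2B 1 1 1 0 = cellZ L2B 1 (-1) (-1) (-1)" unfolding cellZ_def emb_eq zB sc_simps by auto
  have G40: "cellZ L2B 1 1 1 0 = {} \<or> cellZ L2B 1 1 1 0 \<in> set cellsB" unfolding E40 using RB1 by (rule disjI2)
  have E41: "cellZ L2B 0 (-1) (-1) 0 = cellZ L2B 1 (-1) (-1) (-1)" unfolding cellZ_def emb_eq zB sc_simps by auto
  have G41: "cellZ L2B 0 (-1) (-1) 0 = {} \<or> cellZ L2B 0 (-1) (-1) 0 \<in> set cellsB" unfolding E41 using RB1 by (rule disjI2)
  have E42: "cellZ L2B 0 (-1) 0 (-1) = cellZ L2B 1 (-1) (-1) (-1)" unfolding cellZ_def emb_eq zB sc_simps by auto
  have G42: "cellZ L2B 0 (-1) 0 (-1) = {} \<or> cellZ L2B 0 (-1) 0 (-1) \<in> set cellsB" unfolding E42 using RB1 by (rule disjI2)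
  have E43: "cellZ L2B 0 (-1) 0 1 = cellZ L2B 1 (-1) (-1) (-1)" unfolding cellZ_def emb_eq zB sc_simps by auto
  have G43: "cellZ L2B 0 (-1) 0 1 = {} \<or> cellZ L2B 0 (-1) 0 1 \<in> set cellsB" unfolding E43 using RB1 by (rule disjI2)
  have E44: "cellZ L2B 0 (-1) 1 0 = cellZ L2B 1 (-1) (-1) (-1)" unfolding cellZ_def emb_eq zB sc_simps by auto
  have G44: "cellZ L2B 0 (-1) 1 0 = {} \<or> cellZ L2B 0 (-1) 1 0 \<in> set cellsB" unfolding E44 using RB1 by (rule disjI2)
  have E45: "cellZ L2B 0 0 (-1) (-1) = cellZ L2B 1 (-1) (-1) (-1)" unfolding cellZ_def emb_eq zB sc_simps by auto
  have G45: "cellZ L2B 0 0 (-1) (-1) = {} \<or> cellZ L2B 0 0 (-1) (-1) \<in> set cellsB" unfolding E45 using RB1 by (rule disjI2)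
  have E46: "cellZ L2B 0 0 (-1) 1 = cellZ L2B 1 (-1) (-1) (-1)" unfolding cellZ_def emb_eq zB sc_simps by auto
  have G46: "cellZ L2B 0 0 (-1) 1 = {} \<or> cellZ L2B 0 0 (-1) 1 \<in> set cellsB" unfolding E46 using RB1 by (rule disjI2)
  have E47: "cellZ L2B 0 0 1 (-1) = cellZ L2B 1 (-1) (-1) (-1)" unfolding cellZ_def emb_eq zB sc_simps by auto
  have G47: "cellZ L2B 0 0 1 (-1) = {} \<or> cellZ L2B 0 0 1 (-1) \<in> set cellsB" unfolding E47 using RB1 by (rule disjI2)
  have E48: "cellZ L2B 0 0 1 1 = cellZ L2B 1 (-1) (-1) (-1)" unfolding cellZ_def emb_eq zB sc_simps by auto
  have G48: "cellZ L2B 0 0 1 1 = {} \<or> cellZ L2B 0 0 1 1 \<in> set cellsB" unfolding E48 using RB1 by (rule disjI2)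
  have E49: "cellZ L2B 0 1 (-1) 0 = cellZ L2B 1 (-1) (-1) (-1)" unfolding cellZ_def emb_eq zB sc_simps by auto
  have G49: "cellZ L2B 0 1 (-1) 0 = {} \<or> cellZ L2B 0 1 (-1) 0 \<in> set cellsB" unfolding E49 using RB1 by (rule disjI2)
  have E50: "cellZ L2B 0 1 0 (-1) = cellZ L2B 1 (-1) (-1) (-1)" unfolding cellZ_def emb_eq zB sc_simps by auto
  have G50: "cellZ L2B 0 1 0 (-1) = {} \<or> cellZ L2B 0 1 0 (-1) \<in> set cellsB" unfolding E50 using RB1 by (rule disjI2)
  have E51: "cellZ L2B 0 1 0 1 = cellZ L2B 1 (-1) (-1) (-1)" unfolding cellZ_def emb_eq zB sc_simps by auto
  have G51: "cellZ L2B 0 1 0 1 = {} \<or> cellZ L2B 0 1 0 1 \<in> set cellsB" unfolding E51 using RB1 by (rule disjI2)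
  have E52: "cellZ L2B 0 1 1 0 = cellZ L2B 1 (-1) (-1) (-1)" unfolding cellZ_def emb_eq zB sc_simps by auto
  have G52: "cellZ L2B 0 1 1 0 = {} \<or> cellZ L2B 0 1 1 0 \<in> set cellsB" unfolding E52 using RB1 by (rule disjI2)
  have E53: "cellZ L2B 1 (-1) 0 0 = cellZ L2B 1 (-1) (-1) (-1)" unfolding cellZ_def emb_eq zB sc_simps by auto
  have G53: "cellZ L2B 1 (-1) 0 0 = {} \<or> cellZ L2B 1 (-1) 0 0 \<in> set cellsB" unfolding E53 using RB1 by (rule disjI2)
  have E54: "cellZ L2B 1 0 (-1) 0 = cellZ L2B 1 (-1) (-1) (-1)" unfolding cellZ_def emb_eq zB sc_simps by auto
  have G54: "cellZ L2B 1 0 (-1) 0 = {} \<or> cellZ L2B 1 0 (-1) 0 \<in> set cellsB" unfolding E54 using RB1 by (rule disjI2)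
  have E55: "cellZ L2B 1 0 0 (-1) = cellZ L2B 1 (-1) (-1) (-1)" unfolding cellZ_def emb_eq zB sc_simps by auto
  have G55: "cellZ L2B 1 0 0 (-1) = {} \<or> cellZ L2B 1 0 0 (-1) \<in> set cellsB" unfolding E55 using RB1 by (rule disjI2)
  have E56: "cellZ L2B 1 0 1 0 = cellZ L2B 1 (-1) (-1) (-1)" unfolding cellZ_def emb_eq zB sc_simps by auto
  have G56: "cellZ L2B 1 0 1 0 = {} \<or> cellZ L2B 1 0 1 0 \<in> set cellsB" unfolding E56 using RB1 by (rule disjI2)
  have E57: "cellZ L2B 1 1 0 0 = cellZ L2B 1 (-1) (-1) (-1)" unfolding cellZ_def emb_eq zB sc_simps by auto
  have G57: "cellZ L2B 1 1 0 0 = {} \<or> cellZ L2B 1 1 0 0 \<in> set cellsB" unfolding E57 using RB1 by (rule disjI2)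
  have E58: "cellZ L2B 0 (-1) 0 0 = cellZ L2B 1 (-1) (-1) (-1)" unfolding cellZ_def emb_eq zB sc_simps by auto
  have G58: "cellZ L2B 0 (-1) 0 0 = {} \<or> cellZ L2B 0 (-1) 0 0 \<in> set cellsB" unfolding E58 using RB1 by (rule disjI2)
  have E59: "cellZ L2B 0 0 (-1) 0 = cellZ L2B 1 (-1) (-1) (-1)" unfolding cellZ_def emb_eq zB sc_simps by auto
  have G59: "cellZ L2B 0 0 (-1) 0 = {} \<or> cellZ L2B 0 0 (-1) 0 \<in> set cellsB" unfolding E59 using RB1 by (rule disjI2)
  have E60: "cellZ L2B 0 0 0 (-1) = cellZ L2B 1 (-1) (-1) (-1)" unfolding cellZ_def emb_eq zB sc_simps by auto
  have G60: "cellZ L2B 0 0 0 (-1) = {} \<or> cellZ L2B 0 0 0 (-1) \<in> set cellsB" unfolding E60 using RB1 by (rule disjI2)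
  have E61: "cellZ L2B 0 0 0 1 = cellZ L2B 1 (-1) (-1) (-1)" unfolding cellZ_def emb_eq zB sc_simps by auto
  have G61: "cellZ L2B 0 0 0 1 = {} \<or> cellZ L2B 0 0 0 1 \<in> set cellsB" unfolding E61 using RB1 by (rule disjI2)
  have E62: "cellZ L2B 0 0 1 0 = cellZ L2B 1 (-1) (-1) (-1)" unfolding cellZ_def emb_eq zB sc_simps by auto
  have G62: "cellZ L2B 0 0 1 0 = {} \<or> cellZ L2B 0 0 1 0 \<in> set cellsB" unfolding E62 using RB1 by (rule disjI2)
  have E63: "cellZ L2B 0 1 0 0 = cellZ L2B 1 (-1) (-1) (-1)" unfolding cellZ_def emb_eq zB sc_simps by auto
  have G63: "cellZ L2B 0 1 0 0 = {} \<or> cellZ L2B 0 1 0 0 \<in> set cellsB" unfolding E63 using RB1 by (rule disjI2)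
  have E64: "cellZ L2B 1 0 0 0 = cellZ L2B 1 (-1) (-1) (-1)" unfolding cellZ_def emb_eq zB sc_simps by auto
  have G64: "cellZ L2B 1 0 0 0 = {} \<or> cellZ L2B 1 0 0 0 \<in> set cellsB" unfolding E64 using RB1 by (rule disjI2)
  have E65: "cellZ L2B 0 0 0 0 = cellZ L2B 1 (-1) (-1) (-1)" unfolding cellZ_def emb_eq zB sc_simps by auto
  have G65: "cellZ L2B 0 0 0 0 = {} \<or> cellZ L2B 0 0 0 0 \<in> set cellsB" unfolding E65 using RB1 by (rule disjI2)
  have G66: "cellZ L2B 0 (-1) 1 (-1) = {} \<or> cellZ L2B 0 (-1) 1 (-1) \<in> set cellsB" using RB2 by (rule disjI2)
  have G67: "cellZ L2B 0 1 (-1) (-1) = {} \<or> cellZ L2B 0 1 (-1) (-1) \<in> set cellsB" using RB3 by (rule disjI2)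
  have G68: "cellZ L2B 1 (-1) (-1) 1 = {} \<or> cellZ L2B 1 (-1) (-1) 1 \<in> set cellsB" using RB4 by (rule disjI2)
  have E69: "cellZ L2B 1 1 1 1 = cellZ L2B 1 (-1) (-1) 1" unfolding cellZ_def emb_eq zB sc_simps by auto
  have G69: "cellZ L2B 1 1 1 1 = {} \<or> cellZ L2B 1 1 1 1 \<in> set cellsB" unfolding E69 using RB4 by (rule disjI2)
  have E70: "cellZ L2B 1 (-1) 0 1 = cellZ L2B 1 (-1) (-1) 1" unfolding cellZ_def emb_eq zB sc_simps by auto
  have G70: "cellZ L2B 1 (-1) 0 1 = {} \<or> cellZ L2B 1 (-1) 0 1 \<in> set cellsB" unfolding E70 using RB4 by (rule disjI2)
  have E71: "cellZ L2B 1 0 (-1) 1 = cellZ L2B 1 (-1) (-1) 1" unfolding cellZ_def emb_eq zB sc_simps by auto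
  have G71: "cellZ L2B 1 0 (-1) 1 = {} \<or> cellZ L2B 1 0 (-1) 1 \<in> set cellsB" unfolding E71 using RB4 by (rule disjI2)
  have E72: "cellZ L2B 1 0 1 1 = cellZ L2B 1 (-1) (-1) 1" unfolding cellZ_def emb_eq zB sc_simps by auto
  have G72: "cellZ L2B 1 0 1 1 = {} \<or> cellZ L2B 1 0 1 1 \<in> set cellsB" unfolding E72 using RB4 by (rule disjI2)
  have E73: "cellZ L2B 1 1 0 1 = cellZ L2B 1 (-1) (-1) 1" unfolding cellZ_def emb_eq zB sc_simps by auto
  have G73: "cellZ L2B 1 1 0 1 = {} \<or> cellZ L2B 1 1 0 1 \<in> set cellsB" unfolding E73 using RB4 by (rule disjI2)
  have E74: "cellZ L2B 1 0 0 1 = cellZ L2B 1 (-1) (-1) 1" unfolding cellZ_def emb_eq zB sc_simps by auto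
  have G74: "cellZ L2B 1 0 0 1 = {} \<or> cellZ L2B 1 0 0 1 \<in> set cellsB" unfolding E74 using RB4 by (rule disjI2)
  have G75: "cellZ L2B 1 (-1) 1 (-1) = {} \<or> cellZ L2B 1 (-1) 1 (-1) \<in> set cellsB" using RB10 by (rule disjI2)
  have G76: "cellZ L2B 1 (-1) 1 0 = {} \<or> cellZ L2B 1 (-1) 1 0 \<in> set cellsB" using RB5 by (rule disjI2)
  have G77: "cellZ L2B 1 (-1) 1 1 = {} \<or> cellZ L2B 1 (-1) 1 1 \<in> set cellsB" using RB9 by (rule disjI2)
  have G78: "cellZ L2B 1 1 (-1) (-1) = {} \<or> cellZ L2B 1 1 (-1) (-1) \<in> set cellsB" using RB8 by (rule disjI2)
  have G79: "cellZ L2B 1 1 (-1) 0 = {} \<or> cellZ L2B 1 1 (-1) 0 \<in> set cellsB" using RB6 by (rule disjI2)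
  have G80: "cellZ L2B 1 1 (-1) 1 = {} \<or> cellZ L2B 1 1 (-1) 1 \<in> set cellsB" using RB7 by (rule disjI2)
  have "\<forall>a\<in>{-1,0,1}. \<forall>b\<in>{-1,0,1}. \<forall>c\<in>{-1,0,1}. \<forall>d\<in>{-1,0,1}. cellZ L2B a b c d = {} \<or> cellZ L2B a b c d \<in> set cellsB"
    by (simp only: ball_simps(5,7) G0 G1 G2 G3 G4 G5 G6 G7 G8 G9 G10 G11 G12 G13 G14 G15 G16 G17 G18 G19 G20 G21 G22 G23 G24 G25 G26 G27 G28 G29 G30 G31 G32 G33 G34 G35 G36 G37 G38 G39 G40 G41 G42 G43 G44 G45 G46 G47 G48 G49 G50 G51 G52 G53 G54 G55 G56 G57 G58 G59 G60 G61 G62 G63 G64 G65 G66 G67 G68 G69 G70 G71 G72 G73 G74 G75 G76 G77 G78 G79 G80 simp_thms)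
  then show ?thesis using assms by blast
qed
lemma WB0: "mkpt (-3/2) 0 \<in> cellZ L2B (-1) (-1) (-1) (-1)" by (simp add: cellZ_def zB sc_simps)
lemma MB0: "cellZ L2B (-1) (-1) (-1) (-1) \<in> {D. D \<noteq> {} \<and> (\<exists>a b c d. a \<in> {-1,0,1} \<and> b \<in> {-1,0,1} \<and> c \<in> {-1,0,1} \<and> d \<in> {-1,0,1} \<and> D = cellZ L2B a b c d)}"
  apply (simp only: mem_Collect_eq, rule conjI)
  using WB0 apply blast
  by (rule exI[of _ "(-1)"], rule exI[of _ "(-1)"], rule exI[of _ "(-1)"], rule exI[of _ "(-1)"]) simp
lemma WB1: "mkpt 0 0 \<in> cellZ L2B 1 (-1) (-1) (-1)" by (simp add: cellZ_def zB sc_simps)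
lemma MB1: "cellZ L2B 1 (-1) (-1) (-1) \<in> {D. D \<noteq> {} \<and> (\<exists>a b c d. a \<in> {-1,0,1} \<and> b \<in> {-1,0,1} \<and> c \<in> {-1,0,1} \<and> d \<in> {-1,0,1} \<and> D = cellZ L2B a b c d)}"
  apply (simp only: mem_Collect_eq, rule conjI)
  using WB1 apply blast
  by (rule exI[of _ "1"], rule exI[of _ "(-1)"], rule exI[of _ "(-1)"], rule exI[of _ "(-1)"]) simp
lemma WB2: "mkpt 0 (-3/2) \<in> cellZ L2B 0 (-1) 1 (-1)" by (simp add: cellZ_def zB sc_simps)
lemma MB2: "cellZ L2B 0 (-1) 1 (-1) \<in> {D. D \<noteq> {} \<and> (\<exists>a b c d. a \<in> {-1,0,1} \<and> b \<in> {-1,0,1} \<and> c \<in> {-1,0,1} \<and> d \<in> {-1,0,1} \<and> D = cellZ L2B a b c d)}"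
  apply (simp only: mem_Collect_eq, rule conjI)
  using WB2 apply blast
  by (rule exI[of _ "0"], rule exI[of _ "(-1)"], rule exI[of _ "1"], rule exI[of _ "(-1)"]) simp
lemma WB3: "mkpt 0 (3/2) \<in> cellZ L2B 0 1 (-1) (-1)" by (simp add: cellZ_def zB sc_simps)
lemma MB3: "cellZ L2B 0 1 (-1) (-1) \<in> {D. D \<noteq> {} \<and> (\<exists>a b c d. a \<in> {-1,0,1} \<and> b \<in> {-1,0,1} \<and> c \<in> {-1,0,1} \<and> d \<in> {-1,0,1} \<and> D = cellZ L2B a b c d)}"
  apply (simp only: mem_Collect_eq, rule conjI)
  using WB3 apply blast
  by (rule exI[of _ "0"], rule exI[of _ "1"], rule exI[of _ "(-1)"], rule exI[of _ "(-1)"]) simp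
lemma WB4: "mkpt (3/2) 0 \<in> cellZ L2B 1 (-1) (-1) 1" by (simp add: cellZ_def zB sc_simps)
lemma MB4: "cellZ L2B 1 (-1) (-1) 1 \<in> {D. D \<noteq> {} \<and> (\<exists>a b c d. a \<in> {-1,0,1} \<and> b \<in> {-1,0,1} \<and> c \<in> {-1,0,1} \<and> d \<in> {-1,0,1} \<and> D = cellZ L2B a b c d)}"
  apply (simp only: mem_Collect_eq, rule conjI)
  using WB4 apply blast
  by (rule exI[of _ "1"], rule exI[of _ "(-1)"], rule exI[of _ "(-1)"], rule exI[of _ "1"]) simp
lemma WB5: "mkpt (3/2) (-3/2) \<in> cellZ L2B 1 (-1) 1 0" by (simp add: cellZ_def zB sc_simps)
lemma MB5: "cellZ L2B 1 (-1) 1 0 \<in> {D. D \<noteq> {} \<and> (\<exists>a b c d. a \<in> {-1,0,1} \<and> b \<in> {-1,0,1} \<and> c \<in> {-1,0,1} \<and> d \<in> {-1,0,1} \<and> D = cellZ L2B a b c d)}"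
  apply (simp only: mem_Collect_eq, rule conjI)
  using WB5 apply blast
  by (rule exI[of _ "1"], rule exI[of _ "(-1)"], rule exI[of _ "1"], rule exI[of _ "0"]) simp
lemma WB6: "mkpt (3/2) (3/2) \<in> cellZ L2B 1 1 (-1) 0" by (simp add: cellZ_def zB sc_simps)
lemma MB6: "cellZ L2B 1 1 (-1) 0 \<in> {D. D \<noteq> {} \<and> (\<exists>a b c d. a \<in> {-1,0,1} \<and> b \<in> {-1,0,1} \<and> c \<in> {-1,0,1} \<and> d \<in> {-1,0,1} \<and> D = cellZ L2B a b c d)}"
  apply (simp only: mem_Collect_eq, rule conjI)
  using WB6 apply blast
  by (rule exI[of _ "1"], rule exI[of _ "1"], rule exI[of _ "(-1)"], rule exI[of _ "0"]) simp
lemma WB7: "mkpt (9/4) 0 \<in> cellZ L2B 1 1 (-1) 1" by (simp add: cellZ_def zB sc_simps)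
lemma MB7: "cellZ L2B 1 1 (-1) 1 \<in> {D. D \<noteq> {} \<and> (\<exists>a b c d. a \<in> {-1,0,1} \<and> b \<in> {-1,0,1} \<and> c \<in> {-1,0,1} \<and> d \<in> {-1,0,1} \<and> D = cellZ L2B a b c d)}"
  apply (simp only: mem_Collect_eq, rule conjI)
  using WB7 apply blast
  by (rule exI[of _ "1"], rule exI[of _ "1"], rule exI[of _ "(-1)"], rule exI[of _ "1"]) simp
lemma WB8: "mkpt (3/4) 3 \<in> cellZ L2B 1 1 (-1) (-1)" by (simp add: cellZ_def zB sc_simps)
lemma MB8: "cellZ L2B 1 1 (-1) (-1) \<in> {D. D \<noteq> {} \<and> (\<exists>a b c d. a \<in> {-1,0,1} \<and> b \<in> {-1,0,1} \<and> c \<in> {-1,0,1} \<and> d \<in> {-1,0,1} \<and> D = cellZ L2B a b c d)}"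
  apply (simp only: mem_Collect_eq, rule conjI)
  using WB8 apply blast
  by (rule exI[of _ "1"], rule exI[of _ "1"], rule exI[of _ "(-1)"], rule exI[of _ "(-1)"]) simp
lemma WB9: "mkpt (9/4) (-9/4) \<in> cellZ L2B 1 (-1) 1 1" by (simp add: cellZ_def zB sc_simps)
lemma MB9: "cellZ L2B 1 (-1) 1 1 \<in> {D. D \<noteq> {} \<and> (\<exists>a b c d. a \<in> {-1,0,1} \<and> b \<in> {-1,0,1} \<and> c \<in> {-1,0,1} \<and> d \<in> {-1,0,1} \<and> D = cellZ L2B a b c d)}"
  apply (simp only: mem_Collect_eq, rule conjI)
  using WB9 apply blast
  by (rule exI[of _ "1"], rule exI[of _ "(-1)"], rule exI[of _ "1"], rule exI[of _ "1"]) simp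
lemma WB10: "mkpt (3/4) (-3/4) \<in> cellZ L2B 1 (-1) 1 (-1)" by (simp add: cellZ_def zB sc_simps)
lemma MB10: "cellZ L2B 1 (-1) 1 (-1) \<in> {D. D \<noteq> {} \<and> (\<exists>a b c d. a \<in> {-1,0,1} \<and> b \<in> {-1,0,1} \<and> c \<in> {-1,0,1} \<and> d \<in> {-1,0,1} \<and> D = cellZ L2B a b c d)}"
  apply (simp only: mem_Collect_eq, rule conjI)
  using WB10 apply blast
  by (rule exI[of _ "1"], rule exI[of _ "(-1)"], rule exI[of _ "1"], rule exI[of _ "(-1)"]) simp
lemma WB11: "mkpt (-3/2) (3/2) \<in> cellZ L2B (-1) 1 (-1) (-1)" by (simp add: cellZ_def zB sc_simps)
lemma MB11: "cellZ L2B (-1) 1 (-1) (-1) \<in> {D. D \<noteq> {} \<and> (\<exists>a b c d. a \<in> {-1,0,1} \<and> b \<in> {-1,0,1} \<and> c \<in> {-1,0,1} \<and> d \<in> {-1,0,1} \<and> D = cellZ L2B a b c d)}"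
  apply (simp only: mem_Collect_eq, rule conjI)
  using WB11 apply blast
  by (rule exI[of _ "(-1)"], rule exI[of _ "1"], rule exI[of _ "(-1)"], rule exI[of _ "(-1)"]) simp
lemma WB12: "mkpt (-3/2) (-3/2) \<in> cellZ L2B (-1) (-1) 1 (-1)" by (simp add: cellZ_def zB sc_simps)
lemma MB12: "cellZ L2B (-1) (-1) 1 (-1) \<in> {D. D \<noteq> {} \<and> (\<exists>a b c d. a \<in> {-1,0,1} \<and> b \<in> {-1,0,1} \<and> c \<in> {-1,0,1} \<and> d \<in> {-1,0,1} \<and> D = cellZ L2B a b c d)}"
  apply (simp only: mem_Collect_eq, rule conjI)
  using WB12 apply blast
  by (rule exI[of _ "(-1)"], rule exI[of _ "(-1)"], rule exI[of _ "1"], rule exI[of _ "(-1)"]) simp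
lemma canonB: "canonical_complex nsx [L1, L2B, L3] = set cellsB"
  unfolding canon3 canon2
proof
  show "{D. D \<noteq> {} \<and> (\<exists>a b c d. a \<in> {-1,0,1} \<and> b \<in> {-1,0,1} \<and> c \<in> {-1,0,1} \<and> d \<in> {-1,0,1} \<and> D = cellZ L2B a b c d)} \<subseteq> set cellsB"
  proof
    fix D assume "D \<in> {D. D \<noteq> {} \<and> (\<exists>a b c d. a \<in> {-1,0,1} \<and> b \<in> {-1,0,1} \<and> c \<in> {-1,0,1} \<and> d \<in> {-1,0,1} \<and> D = cellZ L2B a b c d)}"
    then obtain a b c d where D: "D \<noteq> {}" "a \<in> {-1,0,1}" "b \<in> {-1,0,1}" "c \<in> {-1,0,1}" "d \<in> {-1,0,1}" "D = cellZ L2B a b c d" by blast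
    show "D \<in> set cellsB" using allB[OF D(2-5)] D(1,6) by simp
  qed
  show "set cellsB \<subseteq> {D. D \<noteq> {} \<and> (\<exists>a b c d. a \<in> {-1,0,1} \<and> b \<in> {-1,0,1} \<and> c \<in> {-1,0,1} \<and> d \<in> {-1,0,1} \<and> D = cellZ L2B a b c d)}"
    by (simp only: cellsB_def list.set insert_subset empty_subsetI simp_thms MB0 MB1 MB2 MB3 MB4 MB5 MB6 MB7 MB8 MB9 MB10 MB11 MB12)
qed
lemma DB0: "cell_dim (cellZ L2B (-1) (-1) (-1) (-1)) \<noteq> 2"
proof -
  have "cellZ L2B (-1) (-1) (-1) (-1) \<subseteq> emb (\<lambda>x y. 0 * x + 1 * y = 0)"
    unfolding cellZ_def by (rule emb_mono) (auto simp: zB sc_simps)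
  then have "cell_dim (cellZ L2B (-1) (-1) (-1) (-1)) \<le> 1" by (rule lowdim) simp
  then show ?thesis by simp
qed
lemma DB1: "cell_dim (cellZ L2B 1 (-1) (-1) (-1)) \<noteq> 2"
proof -
  have "cellZ L2B 1 (-1) (-1) (-1) \<subseteq> emb (\<lambda>x y. 1 * x + 0 * y = 0)"
    unfolding cellZ_def by (rule emb_mono) (auto simp: zB sc_simps)
  then have "cell_dim (cellZ L2B 1 (-1) (-1) (-1)) \<le> 1" by (rule lowdim) simp
  then show ?thesis by simp
qed
lemma DB2: "cell_dim (cellZ L2B 0 (-1) 1 (-1)) \<noteq> 2"
proof -
  have "cellZ L2B 0 (-1) 1 (-1) \<subseteq> emb (\<lambda>x y. 1 * x + 0 * y = 0)"
    unfolding cellZ_def by (rule emb_mono) (auto simp: zB sc_simps)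
  then have "cell_dim (cellZ L2B 0 (-1) 1 (-1)) \<le> 1" by (rule lowdim) simp
  then show ?thesis by simp
qed
lemma DB3: "cell_dim (cellZ L2B 0 1 (-1) (-1)) \<noteq> 2"
proof -
  have "cellZ L2B 0 1 (-1) (-1) \<subseteq> emb (\<lambda>x y. 1 * x + 0 * y = 0)"
    unfolding cellZ_def by (rule emb_mono) (auto simp: zB sc_simps)
  then have "cell_dim (cellZ L2B 0 1 (-1) (-1)) \<le> 1" by (rule lowdim) simp
  then show ?thesis by simp
qed
lemma DB4: "cell_dim (cellZ L2B 1 (-1) (-1) 1) \<noteq> 2"
proof -
  have "cellZ L2B 1 (-1) (-1) 1 \<subseteq> emb (\<lambda>x y. 0 * x + 1 * y = 0)"
    unfolding cellZ_def by (rule emb_mono) (auto simp: zB sc_simps)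
  then have "cell_dim (cellZ L2B 1 (-1) (-1) 1) \<le> 1" by (rule lowdim) simp
  then show ?thesis by simp
qed
lemma DB5: "cell_dim (cellZ L2B 1 (-1) 1 0) \<noteq> 2"
proof -
  have "cellZ L2B 1 (-1) 1 0 \<subseteq> emb (\<lambda>x y. 1 * x + 1 * y = 0)"
    unfolding cellZ_def by (rule emb_mono) (auto simp: zB sc_simps)
  then have "cell_dim (cellZ L2B 1 (-1) 1 0) \<le> 1" by (rule lowdim) simp
  then show ?thesis by simp
qed
lemma DB6: "cell_dim (cellZ L2B 1 1 (-1) 0) \<noteq> 2"
proof -
  have "cellZ L2B 1 1 (-1) 0 \<subseteq> emb (\<lambda>x y. 1 * x + (-1) * y = 0)"
    unfolding cellZ_def by (rule emb_mono) (auto simp: zB sc_simps)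
  then have "cell_dim (cellZ L2B 1 1 (-1) 0) \<le> 1" by (rule lowdim) simp
  then show ?thesis by simp
qed
lemma SB0: "cell_dim (cellZ L2B 1 1 (-1) 1) = 2 \<and> sign_seq nsx [L1, L2B, L3] (cellZ L2B 1 1 (-1) 1) = [1, 1, (-1), 1, -1] @ GG"
proof -
  have sq: "\<And>x y. \<bar>x - 2\<bar> < 1/4 \<Longrightarrow> \<bar>y - 1\<bar> < 1/4 \<Longrightarrow> mkpt x y \<in> cellZ L2B 1 1 (-1) 1"
    unfolding abs_less_iff by (simp add: cellZ_def zB sc_simps max_def)
  have "cell_dim (cellZ L2B 1 1 (-1) 1) = 2 \<and> sign_seq nsx [L1, L2B, L3] (cellZ L2B 1 1 (-1) 1) = [of_int 1, of_int 1, of_int (-1), of_int 1, -1] @ GG"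
    by (rule seq_full[of _ _ _ _ _ "1/4" "2" "1"]) (use ZpB sq in auto)
  then show ?thesis by simp
qed
lemma SB1: "cell_dim (cellZ L2B 1 1 (-1) (-1)) = 2 \<and> sign_seq nsx [L1, L2B, L3] (cellZ L2B 1 1 (-1) (-1)) = [1, 1, (-1), (-1), -1] @ GG"
proof -
  have sq: "\<And>x y. \<bar>x - 1\<bar> < 1/4 \<Longrightarrow> \<bar>y - 2\<bar> < 1/4 \<Longrightarrow> mkpt x y \<in> cellZ L2B 1 1 (-1) (-1)"
    unfolding abs_less_iff by (simp add: cellZ_def zB sc_simps max_def)
  have "cell_dim (cellZ L2B 1 1 (-1) (-1)) = 2 \<and> sign_seq nsx [L1, L2B, L3] (cellZ L2B 1 1 (-1) (-1)) = [of_int 1, of_int 1, of_int (-1), of_int (-1), -1] @ GG"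
    by (rule seq_full[of _ _ _ _ _ "1/4" "1" "2"]) (use ZpB sq in auto)
  then show ?thesis by simp
qed
lemma SB2: "cell_dim (cellZ L2B 1 (-1) 1 1) = 2 \<and> sign_seq nsx [L1, L2B, L3] (cellZ L2B 1 (-1) 1 1) = [1, (-1), 1, 1, -1] @ GG"
proof -
  have sq: "\<And>x y. \<bar>x - 2\<bar> < 1/4 \<Longrightarrow> \<bar>y - (-1)\<bar> < 1/4 \<Longrightarrow> mkpt x y \<in> cellZ L2B 1 (-1) 1 1"
    unfolding abs_less_iff by (simp add: cellZ_def zB sc_simps max_def)
  have "cell_dim (cellZ L2B 1 (-1) 1 1) = 2 \<and> sign_seq nsx [L1, L2B, L3] (cellZ L2B 1 (-1) 1 1) = [of_int 1, of_int (-1), of_int 1, of_int 1, -1] @ GG"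
    by (rule seq_full[of _ _ _ _ _ "1/4" "2" "(-1)"]) (use ZpB sq in auto)
  then show ?thesis by simp
qed
lemma SB3: "cell_dim (cellZ L2B 1 (-1) 1 (-1)) = 2 \<and> sign_seq nsx [L1, L2B, L3] (cellZ L2B 1 (-1) 1 (-1)) = [1, (-1), 1, (-1), -1] @ GG"
proof -
  have sq: "\<And>x y. \<bar>x - 1\<bar> < 1/4 \<Longrightarrow> \<bar>y - (-2)\<bar> < 1/4 \<Longrightarrow> mkpt x y \<in> cellZ L2B 1 (-1) 1 (-1)"
    unfolding abs_less_iff by (simp add: cellZ_def zB sc_simps max_def)
  have "cell_dim (cellZ L2B 1 (-1) 1 (-1)) = 2 \<and> sign_seq nsx [L1, L2B, L3] (cellZ L2B 1 (-1) 1 (-1)) = [of_int 1, of_int (-1), of_int 1, of_int (-1), -1] @ GG"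
    by (rule seq_full[of _ _ _ _ _ "1/4" "1" "(-2)"]) (use ZpB sq in auto)
  then show ?thesis by simp
qed
lemma SB4: "cell_dim (cellZ L2B (-1) 1 (-1) (-1)) = 2 \<and> sign_seq nsx [L1, L2B, L3] (cellZ L2B (-1) 1 (-1) (-1)) = [(-1), 1, (-1), (-1), -1] @ GG"
proof -
  have sq: "\<And>x y. \<bar>x - (-1)\<bar> < 1/4 \<Longrightarrow> \<bar>y - 1\<bar> < 1/4 \<Longrightarrow> mkpt x y \<in> cellZ L2B (-1) 1 (-1) (-1)"
    unfolding abs_less_iff by (simp add: cellZ_def zB sc_simps max_def)
  have "cell_dim (cellZ L2B (-1) 1 (-1) (-1)) = 2 \<and> sign_seq nsx [L1, L2B, L3] (cellZ L2B (-1) 1 (-1) (-1)) = [of_int (-1), of_int 1, of_int (-1), of_int (-1), -1] @ GG"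
    by (rule seq_full[of _ _ _ _ _ "1/4" "(-1)" "1"]) (use ZpB sq in auto)
  then show ?thesis by simp
qed
lemma SB5: "cell_dim (cellZ L2B (-1) (-1) 1 (-1)) = 2 \<and> sign_seq nsx [L1, L2B, L3] (cellZ L2B (-1) (-1) 1 (-1)) = [(-1), (-1), 1, (-1), -1] @ GG"
proof -
  have sq: "\<And>x y. \<bar>x - (-1)\<bar> < 1/4 \<Longrightarrow> \<bar>y - (-1)\<bar> < 1/4 \<Longrightarrow> mkpt x y \<in> cellZ L2B (-1) (-1) 1 (-1)"
    unfolding abs_less_iff by (simp add: cellZ_def zB sc_simps max_def)
  have "cell_dim (cellZ L2B (-1) (-1) 1 (-1)) = 2 \<and> sign_seq nsx [L1, L2B, L3] (cellZ L2B (-1) (-1) 1 (-1)) = [of_int (-1), of_int (-1), of_int 1, of_int (-1), -1] @ GG"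
    by (rule seq_full[of _ _ _ _ _ "1/4" "(-1)" "(-1)"]) (use ZpB sq in auto)
  then show ?thesis by simp
qed
lemma patB: "{sign_seq nsx [L1, L2B, L3] C | C. C \<in> canonical_complex nsx [L1, L2B, L3] \<and> cell_dim C = nsx ! 0} = PAT"
proof
  show "{sign_seq nsx [L1, L2B, L3] C | C. C \<in> canonical_complex nsx [L1, L2B, L3] \<and> cell_dim C = nsx ! 0} \<subseteq> PAT"
  proof
    fix s assume "s \<in> {sign_seq nsx [L1, L2B, L3] C | C. C \<in> canonical_complex nsx [L1, L2B, L3] \<and> cell_dim C = nsx ! 0}"
    then obtain C where C: "C \<in> set cellsB" "cell_dim C = 2" "s = sign_seq nsx [L1, L2B, L3] C"
      unfolding canonB by (auto simp: nsx_def)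
    from C(1) have "C = cellZ L2B (-1) (-1) (-1) (-1) \<or> C = cellZ L2B 1 (-1) (-1) (-1) \<or> C = cellZ L2B 0 (-1) 1 (-1) \<or> C = cellZ L2B 0 1 (-1) (-1) \<or> C = cellZ L2B 1 (-1) (-1) 1 \<or> C = cellZ L2B 1 (-1) 1 0 \<or> C = cellZ L2B 1 1 (-1) 0 \<or> C = cellZ L2B 1 1 (-1) 1 \<or> C = cellZ L2B 1 1 (-1) (-1) \<or> C = cellZ L2B 1 (-1) 1 1 \<or> C = cellZ L2B 1 (-1) 1 (-1) \<or> C = cellZ L2B (-1) 1 (-1) (-1) \<or> C = cellZ L2B (-1) (-1) 1 (-1)" by (simp add: cellsB_def)
    then show "s \<in> PAT"
    proof (elim disjE)
      assume "C = cellZ L2B (-1) (-1) (-1) (-1)" then show ?thesis using C(2) DB0 by simp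
    next
      assume "C = cellZ L2B 1 (-1) (-1) (-1)" then show ?thesis using C(2) DB1 by simp
    next
      assume "C = cellZ L2B 0 (-1) 1 (-1)" then show ?thesis using C(2) DB2 by simp
    next
      assume "C = cellZ L2B 0 1 (-1) (-1)" then show ?thesis using C(2) DB3 by simp
    next
      assume "C = cellZ L2B 1 (-1) (-1) 1" then show ?thesis using C(2) DB4 by simp
    next
      assume "C = cellZ L2B 1 (-1) 1 0" then show ?thesis using C(2) DB5 by simp
    next
      assume "C = cellZ L2B 1 1 (-1) 0" then show ?thesis using C(2) DB6 by simp
    next
      assume "C = cellZ L2B 1 1 (-1) 1" then show ?thesis using C(3) SB0 by (simp add: PAT_def)
    next
      assume "C = cellZ L2B 1 1 (-1) (-1)" then show ?thesis using C(3) SB1 by (simp add: PAT_def)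
    next
      assume "C = cellZ L2B 1 (-1) 1 1" then show ?thesis using C(3) SB2 by (simp add: PAT_def)
    next
      assume "C = cellZ L2B 1 (-1) 1 (-1)" then show ?thesis using C(3) SB3 by (simp add: PAT_def)
    next
      assume "C = cellZ L2B (-1) 1 (-1) (-1)" then show ?thesis using C(3) SB4 by (simp add: PAT_def)
    next
      assume "C = cellZ L2B (-1) (-1) 1 (-1)" then show ?thesis using C(3) SB5 by (simp add: PAT_def)
    qed
  qed
  show "PAT \<subseteq> {sign_seq nsx [L1, L2B, L3] C | C. C \<in> canonical_complex nsx [L1, L2B, L3] \<and> cell_dim C = nsx ! 0}"
    unfolding PAT_def canonB
  proof (intro insert_subsetI empty_subsetI)
    show "[1, 1, (-1), 1, -1] @ GG \<in> {sign_seq nsx [L1, L2B, L3] C | C. C \<in> set cellsB \<and> cell_dim C = nsx ! 0}"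
      by (intro CollectI exI[of _ "cellZ L2B 1 1 (-1) 1"]) (use SB0 RB7 in \<open>simp add: nsx_def\<close>)
  next
    show "[1, 1, (-1), (-1), -1] @ GG \<in> {sign_seq nsx [L1, L2B, L3] C | C. C \<in> set cellsB \<and> cell_dim C = nsx ! 0}"
      by (intro CollectI exI[of _ "cellZ L2B 1 1 (-1) (-1)"]) (use SB1 RB8 in \<open>simp add: nsx_def\<close>)
  next
    show "[1, (-1), 1, 1, -1] @ GG \<in> {sign_seq nsx [L1, L2B, L3] C | C. C \<in> set cellsB \<and> cell_dim C = nsx ! 0}"
      by (intro CollectI exI[of _ "cellZ L2B 1 (-1) 1 1"]) (use SB2 RB9 in \<open>simp add: nsx_def\<close>)
  next
    show "[1, (-1), 1, (-1), -1] @ GG \<in> {sign_seq nsx [L1, L2B, L3] C | C. C \<in> set cellsB \<and> cell_dim C = nsx ! 0}"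
      by (intro CollectI exI[of _ "cellZ L2B 1 (-1) 1 (-1)"]) (use SB3 RB10 in \<open>simp add: nsx_def\<close>)
  next
    show "[(-1), 1, (-1), (-1), -1] @ GG \<in> {sign_seq nsx [L1, L2B, L3] C | C. C \<in> set cellsB \<and> cell_dim C = nsx ! 0}"
      by (intro CollectI exI[of _ "cellZ L2B (-1) 1 (-1) (-1)"]) (use SB4 RB11 in \<open>simp add: nsx_def\<close>)
  next
    show "[(-1), (-1), 1, (-1), -1] @ GG \<in> {sign_seq nsx [L1, L2B, L3] C | C. C \<in> set cellsB \<and> cell_dim C = nsx ! 0}"
      by (intro CollectI exI[of _ "cellZ L2B (-1) (-1) 1 (-1)"]) (use SB5 RB12 in \<open>simp add: nsx_def\<close>)
  qed
qed

theorem theorem15: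
  shows "\<exists>ns Ls ns' Ls'. wf_net ns Ls \<and> wf_net ns' Ls' \<and>
     ns ! 0 = ns' ! 0 \<and> sum_list (tl ns) = sum_list (tl ns') \<and>
     {sign_seq ns Ls C | C. C \<in> canonical_complex ns Ls \<and> cell_dim C = ns ! 0} =
     {sign_seq ns' Ls' C' | C'. C' \<in> canonical_complex ns' Ls' \<and> cell_dim C' = ns' ! 0} \<and>
     \<not> comb_equiv (canonical_complex ns Ls) (canonical_complex ns' Ls')"
proof -
  have wf: "wf_net nsx [L1, L, L3]" for L
    by (auto simp: wf_net_def nsx_def less_Suc_eq nth_Cons')
  have nce: "\<not> comb_equiv (canonical_complex nsx [L1, L2A, L3]) (canonical_complex nsx [L1, L2B, L3])"
  proof
    assume "comb_equiv (canonical_complex nsx [L1, L2A, L3]) (canonical_complex nsx [L1, L2B, L3])"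
    then obtain f where "bij_betw f (set cellsA) (set cellsB)" unfolding comb_equiv_def canonA canonB by blast
    then have "card (set cellsA) = card (set cellsB)" by (rule bij_betw_same_card)
    moreover have "card (set cellsA) = length cellsA" using distA by (rule distinct_card)
    moreover have "length cellsA = 15" by (simp add: cellsA_def)
    moreover have "card (set cellsB) \<le> length cellsB" by (rule card_length)
    moreover have "length cellsB = 13" by (simp add: cellsB_def)
    ultimately show False by simp
  qed
  show ?thesis
    apply (rule exI[of _ nsx], rule exI[of _ "[L1, L2A, L3]"], rule exI[of _ nsx], rule exI[of _ "[L1, L2B, L3]"])
    using wf patA patB nce by simp
qed

end
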